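(* Assume $M$ has genus zero and $a\in(0,1)$, $b\in(0,1]$. Let $\alpha=\ln\big(\frac{1-a}{b}\big)$ and $\beta=\ln\big(1+\frac{q'a}{1-a}\big)$, and let $\tilde\mu$ be the probability measure on $(\mathrm s,\mathrm s')\in Q^{\mathsf V}\times Q'^{\mathsf V}$ given by $$\tilde\mu(\mathrm s,\mathrm s')\propto\exp\Big(\sum_{\{v_1,v_2\}\in\mathsf E}\delta_{\mathrm s(v_1),\mathrm s(v_2)}\big(\alpha+\beta\,\delta_{\mathrm s'(v_1),\mathrm s'(v_2)}\big)\Big),$$ where $\delta_{x,y}=1$ if $x=y$ and $0$ otherwise. Then the law of $\sigma$ under $\mathbf P$ equals the law of $\mathrm s$ under $\tilde\mu$.
   Context: $M$ is the sphere or the plane. Let $\mathsf G=(\mathsf V,\mathsf E)$ be a finite connected graph embedded in $M$ with all faces topological discs, and $\mathsf G^*=(\mathsf U,\mathsf E^* )$ its embedded dual ($\mathsf U$ = faces of $\mathsf G$); $e^*$ is the dual edge crossing $e$, $\xi^*=\{e^*:e\in\xi\}$. Fix integers $q,q'\ge1$ and finite $Q,Q'\subset\mathbb C$ with $Q=-Q$, $Q'=-Q'$, $|Q|=q$, $|Q'|=q'$. For $\sigma:\mathsf V\to Q$, $\eta(\sigma)\subseteq\mathsf E^*$ is the set of $e^*$ whose primal $e$ has endpoints with different $\sigma$-values; for $\sigma':\mathsf U\to Q'$, $\eta(\sigma')\subseteq\mathsf E$ is the set of $e$ whose dual $e^*$ has endpoints with different $\sigma'$-values. $\mathbf P(\sigma,\sigma')\propto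 a^{|\eta(\sigma')|}b^{|\eta(\sigma)|}$ on $\Sigma=\{(\sigma,\sigma')\in Q^{\mathsf V}\times Q'^{\mathsf U}:\eta(\sigma)^*\cap\eta(\sigma')=\emptyset\}$. *)

theory Defs
  imports "HOL-Library.FuncSet" Complex_Main
begin

text \<open>Embedded graphs are represented combinatorially by a combinatorial map
  (rotation system): a finite nonempty set of darts D, a fixed-point-free
  involution alpha on D (the two half-edges of an edge) and a permutation
  sigma of D (cyclic order of darts around a vertex).
  The dual map is (sigma o alpha, alpha): the dual edge of the edge {d, alpha d}
  joins the face of d and the face of alpha d.  We identify e* with e.\<close>

definition orb :: "('d \<Rightarrow> 'd) \<Rightarrow> 'd \<Rightarrow> 'd set" where
  "orb f d = {(f ^^ n) d | n. True}"

definition verts :: "'d set \<Rightarrow> ('d \<Rightarrow> 'd) \<Rightarrow> 'd set set" where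
  "verts D sigma = orb sigma ` D"

definition edges :: "'d set \<Rightarrow> ('d \<Rightarrow> 'd) \<Rightarrow> 'd set set" where
  "edges D alpha = orb alpha ` D"

definition faces :: "'d set \<Rightarrow> ('d \<Rightarrow> 'd) \<Rightarrow> ('d \<Rightarrow> 'd) \<Rightarrow> 'd set set" where
  "faces D alpha sigma = orb (sigma \<circ> alpha) ` D"

definition map_rel :: "'d set \<Rightarrow> ('d \<Rightarrow> 'd) \<Rightarrow> ('d \<Rightarrow> 'd) \<Rightarrow> ('d \<times> 'd) set" where
  "map_rel D alpha sigma = {(x, alpha x) | x. x \<in> D} \<union> {(x, sigma x) | x. x \<in> D}"

text \<open>A finite connected graph cellularly embedded in the sphere (genus zero,
  Euler formula V - E + F = 2).\<close>
definition planar_map :: "'d set \<Rightarrow> ('d \<Rightarrow> 'd) \<Rightarrow> ('d \<Rightarrow> 'd) \<Rightarrow> bool" where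
  "planar_map D alpha sigma \<longleftrightarrow>
     finite D \<and> D \<noteq> {} \<and> bij_betw alpha D D \<and> bij_betw sigma D D \<and>
     (\<forall>d\<in>D. alpha d \<noteq> d \<and> alpha (alpha d) = d) \<and>
     (\<forall>d\<in>D. \<forall>d'\<in>D. (d, d') \<in> (map_rel D alpha sigma)\<^sup>*) \<and>
     int (card (verts D sigma)) - int (card (edges D alpha))
       + int (card (faces D alpha sigma)) = 2"

definition eta_primal :: "'d set \<Rightarrow> ('d \<Rightarrow> 'd) \<Rightarrow> ('d \<Rightarrow> 'd) \<Rightarrow> ('d set \<Rightarrow> 'c) \<Rightarrow> 'd set set" where
  "eta_primal D alpha sigma s =
     {orb alpha d | d. d \<in> D \<and> s (orb sigma d) \<noteq> s (orb sigma (alpha d))}"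

definition eta_dual :: "'d set \<Rightarrow> ('d \<Rightarrow> 'd) \<Rightarrow> ('d \<Rightarrow> 'd) \<Rightarrow> ('d set \<Rightarrow> 'c) \<Rightarrow> 'd set set" where
  "eta_dual D alpha sigma s' = eta_primal D alpha (sigma \<circ> alpha) s'"

definition Sigma_conf :: "'d set \<Rightarrow> ('d \<Rightarrow> 'd) \<Rightarrow> ('d \<Rightarrow> 'd) \<Rightarrow> complex set \<Rightarrow> complex set
    \<Rightarrow> (('d set \<Rightarrow> complex) \<times> ('d set \<Rightarrow> complex)) set" where
  "Sigma_conf D alpha sigma Q Q' =
     {(s, s'). s \<in> (verts D sigma \<rightarrow>\<^sub>E Q) \<and> s' \<in> (faces D alpha sigma \<rightarrow>\<^sub>E Q') \<and>
               eta_primal D alpha sigma s \<inter> eta_dual D alpha sigma s' = {}}"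

definition P_weight :: "'d set \<Rightarrow> ('d \<Rightarrow> 'd) \<Rightarrow> ('d \<Rightarrow> 'd) \<Rightarrow> real \<Rightarrow> real
    \<Rightarrow> ('d set \<Rightarrow> complex) \<times> ('d set \<Rightarrow> complex) \<Rightarrow> real" where
  "P_weight D alpha sigma a b p =
     a ^ card (eta_dual D alpha sigma (snd p)) * b ^ card (eta_primal D alpha sigma (fst p))"

definition law_P :: "'d set \<Rightarrow> ('d \<Rightarrow> 'd) \<Rightarrow> ('d \<Rightarrow> 'd) \<Rightarrow> complex set \<Rightarrow> complex set
    \<Rightarrow> real \<Rightarrow> real \<Rightarrow> ('d set \<Rightarrow> complex) \<Rightarrow> real" where
  "law_P D alpha sigma Q Q' a b s0 =
     (\<Sum>p\<in>{p \<in> Sigma_conf D alpha sigma Q Q'. fst p = s0}. P_weight D alpha sigma a b p)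
     / (\<Sum>p\<in>Sigma_conf D alpha sigma Q Q'. P_weight D alpha sigma a b p)"

definition mu_weight :: "'d set \<Rightarrow> ('d \<Rightarrow> 'd) \<Rightarrow> ('d \<Rightarrow> 'd) \<Rightarrow> real \<Rightarrow> real
    \<Rightarrow> ('d set \<Rightarrow> complex) \<Rightarrow> ('d set \<Rightarrow> complex) \<Rightarrow> real" where
  "mu_weight D alpha sigma al be s s' =
     exp (\<Sum>e\<in>edges D alpha.
            (if e \<notin> eta_primal D alpha sigma s then 1 else 0) *
            (al + be * (if e \<notin> eta_primal D alpha sigma s' then 1 else 0)))"

definition law_mu :: "'d set \<Rightarrow> ('d \<Rightarrow> 'd) \<Rightarrow> ('d \<Rightarrow> 'd) \<Rightarrow> complex set \<Rightarrow> complex set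
    \<Rightarrow> real \<Rightarrow> real \<Rightarrow> ('d set \<Rightarrow> complex) \<Rightarrow> real" where
  "law_mu D alpha sigma Q Q' al be s0 =
     (\<Sum>s'\<in>(verts D sigma \<rightarrow>\<^sub>E Q'). mu_weight D alpha sigma al be s0 s')
     / (\<Sum>s\<in>(verts D sigma \<rightarrow>\<^sub>E Q). \<Sum>s'\<in>(verts D sigma \<rightarrow>\<^sub>E Q'). mu_weight D alpha sigma al be s s')"

end

theory Submission
  imports Defs
begin


definition sc :: "('a \<times> 'a) set \<Rightarrow> ('a \<times> 'a) set" where
  "sc R = (R \<union> R\<inverse>)\<^sup>*"

definition eqc :: "'a set \<Rightarrow> ('a \<times> 'a) set \<Rightarrow> ('a \<times> 'a) set" where
  "eqc D R = sc R \<inter> (D \<times> D)"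

definition ncls :: "'a set \<Rightarrow> ('a \<times> 'a) set \<Rightarrow> nat" where
  "ncls D R = card (D // eqc D R)"

lemma sc_sym: "(a,b) \<in> sc R \<Longrightarrow> (b,a) \<in> sc R"
proof -
  assume "(a,b) \<in> sc R"
  hence "(b,a) \<in> ((R \<union> R\<inverse>)\<inverse>)\<^sup>*" unfolding sc_def by (simp add: rtrancl_converse)
  moreover have "(R \<union> R\<inverse>)\<inverse> = R \<union> R\<inverse>" by auto
  ultimately show ?thesis unfolding sc_def by simp
qed

lemma sc_trans: "(a,b) \<in> sc R \<Longrightarrow> (b,c) \<in> sc R \<Longrightarrow> (a,c) \<in> sc R"
  unfolding sc_def by (rule rtrancl_trans)

lemma sc_refl[simp]: "(a,a) \<in> sc R"
  unfolding sc_def by simp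

lemma sc_base: "(a,b) \<in> R \<Longrightarrow> (a,b) \<in> sc R"
  unfolding sc_def by auto

lemma sc_base': "(a,b) \<in> R \<Longrightarrow> (b,a) \<in> sc R"
  unfolding sc_def by auto

lemma sc_mono: "R \<subseteq> R' \<Longrightarrow> sc R \<subseteq> sc R'"
  unfolding sc_def by (intro rtrancl_mono) auto

lemma sc_sub: assumes "R \<subseteq> sc R'" shows "sc R \<subseteq> sc R'"
proof -
  have "R \<union> R\<inverse> \<subseteq> sc R'" using assms sc_sym[of _ _ R'] by blast
  then have "R \<union> R\<inverse> \<subseteq> (R' \<union> R'\<inverse>)\<^sup>*" unfolding sc_def .
  then show ?thesis unfolding sc_def by (rule rtrancl_subset_rtrancl)
qed

lemma eqc_cong: "R \<subseteq> sc R' \<Longrightarrow> R' \<subseteq> sc R \<Longrightarrow> eqc D R = eqc D R'"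
  unfolding eqc_def using sc_sub by blast

lemma ncls_cong: assumes "R \<subseteq> sc R'" "R' \<subseteq> sc R" shows "ncls D R = ncls D R'"
  unfolding ncls_def using eqc_cong[OF assms, of D] by simp

lemma equiv_eqc: "equiv D (eqc D R)"
proof (rule equivI)
  show "refl_on D (eqc D R)" unfolding refl_on_def eqc_def by auto
  show "sym (eqc D R)" unfolding sym_def eqc_def by (auto intro: sc_sym)
  show "trans (eqc D R)" unfolding trans_def eqc_def by (auto intro: sc_trans)
  show "eqc D R \<subseteq> D \<times> D" unfolding eqc_def by auto
qed

lemma sc_insert_char:
  "(a,b) \<in> sc (insert (u,v) R) \<longleftrightarrow>
     (a,b) \<in> sc R \<or> ((a,u) \<in> sc R \<and> (v,b) \<in> sc R) \<or> ((a,v) \<in> sc R \<and> (u,b) \<in> sc R)"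
proof
  assume "(a,b) \<in> sc (insert (u,v) R)"
  then have "(a,b) \<in> ((insert (u,v) R) \<union> (insert (u,v) R)\<inverse>)\<^sup>*" unfolding sc_def .
  then show "(a,b) \<in> sc R \<or> ((a,u) \<in> sc R \<and> (v,b) \<in> sc R) \<or> ((a,v) \<in> sc R \<and> (u,b) \<in> sc R)"
  proof (induction rule: rtrancl_induct)
    case base then show ?case by simp
  next
    case (step b c)
    have bc: "(b,c) \<in> sc R \<or> (b = u \<and> c = v) \<or> (b = v \<and> c = u)"
      using step.hyps(2) sc_base[of b c R] sc_base'[of c b R] by auto
    from bc show ?case
    proof (elim disjE conjE)
      assume "(b,c) \<in> sc R" then show ?case using step.IH sc_trans[of a b R c] sc_trans[of v b R c] sc_trans[of u b R c] by blast
    next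
      assume "b = u" "c = v" then show ?case using step.IH sc_refl[of v R] by blast
    next
      assume "b = v" "c = u" then show ?case using step.IH sc_refl[of u R] by blast
    qed
  qed
next
  have s: "sc R \<subseteq> sc (insert (u,v) R)" by (rule sc_mono) auto
  have uv: "(u,v) \<in> sc (insert (u,v) R)" "(v,u) \<in> sc (insert (u,v) R)"
    using sc_base[of u v "insert (u,v) R"] sc_base'[of u v "insert (u,v) R"] by auto
  assume "(a,b) \<in> sc R \<or> ((a,u) \<in> sc R \<and> (v,b) \<in> sc R) \<or> ((a,v) \<in> sc R \<and> (u,b) \<in> sc R)"
  then show "(a,b) \<in> sc (insert (u,v) R)"
  proof (elim disjE conjE)
    assume "(a,b) \<in> sc R" then show ?thesis using s by blast
  next
    assume "(a,u) \<in> sc R" "(v,b) \<in> sc R"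
    then show ?thesis using s uv(1) sc_trans[of a u _ v] sc_trans[of a v _ b] by blast
  next
    assume "(a,v) \<in> sc R" "(u,b) \<in> sc R"
    then show ?thesis using s uv(2) sc_trans[of a v _ u] sc_trans[of a u _ b] by blast
  qed
qed

lemma ncls_insert_rel:
  assumes "(u,v) \<in> eqc D R"
  shows "ncls D (insert (u,v) R) = ncls D R"
proof (rule ncls_cong)
  show "insert (u, v) R \<subseteq> sc R" using assms sc_base unfolding eqc_def by auto
  show "R \<subseteq> sc (insert (u, v) R)" using sc_base[where R="insert (u,v) R"] by auto
qed

lemma ncls_insert_unrel:
  assumes fin: "finite D" and uD: "u \<in> D" and vD: "v \<in> D" and nr: "(u,v) \<notin> eqc D R"
  shows "ncls D (insert (u,v) R) + 1 = ncls D R"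
proof -
  let ?C = "eqc D R" and ?C' = "eqc D (insert (u,v) R)"
  define Cu where "Cu = ?C``{u}"
  define Cv where "Cv = ?C``{v}"
  define U where "U = Cu \<union> Cv"
  define W where "W = (\<lambda>a. ?C``{a}) ` (D - U)"
  have memC: "\<And>a b. (a,b) \<in> ?C \<longleftrightarrow> a \<in> D \<and> b \<in> D \<and> (a,b) \<in> sc R" unfolding eqc_def by auto
  have memC': "\<And>a b. (a,b) \<in> ?C' \<longleftrightarrow> a \<in> D \<and> b \<in> D \<and> (a,b) \<in> sc (insert (u,v) R)" unfolding eqc_def by auto
  have UD: "U \<subseteq> D" unfolding U_def Cu_def Cv_def eqc_def by auto
  have q1: "D // ?C = insert Cu (insert Cv W)"
  proof -
    have e: "U \<union> (D - U) = D" using UD by auto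
    have qq: "D // ?C = (\<lambda>a. ?C``{a}) ` (U \<union> (D - U))" unfolding e quotient_def by auto
    have "(\<lambda>a. ?C``{a}) ` U = {Cu, Cv}"
    proof
      show "(\<lambda>a. ?C``{a}) ` U \<subseteq> {Cu, Cv}"
      proof
        fix X assume "X \<in> (\<lambda>a. ?C``{a}) ` U"
        then obtain a where a: "a \<in> U" and X: "X = ?C``{a}" by auto
        have "(u,a) \<in> ?C \<or> (v,a) \<in> ?C" using a unfolding U_def Cu_def Cv_def by auto
        then have "?C``{a} = Cu \<or> ?C``{a} = Cv"
          unfolding Cu_def Cv_def using equiv_class_eq[OF equiv_eqc] by metis
        then show "X \<in> {Cu, Cv}" using X by auto
      qed
      have "u \<in> U" "v \<in> U" unfolding U_def Cu_def Cv_def using uD vD by (auto simp: eqc_def)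
      then show "{Cu, Cv} \<subseteq> (\<lambda>a. ?C``{a}) ` U" unfolding Cu_def Cv_def by auto
    qed
    then show ?thesis unfolding qq W_def image_Un by auto
  qed
  have cls_out: "\<And>a. a \<in> D - U \<Longrightarrow> ?C'``{a} = ?C``{a}"
  proof -
    fix a assume a: "a \<in> D - U"
    have "(u,a) \<notin> sc R" "(v,a) \<notin> sc R"
      using a uD vD unfolding U_def Cu_def Cv_def Image_singleton_iff by (auto simp: eqc_def)
    then have nu: "(a,u) \<notin> sc R" and nv: "(a,v) \<notin> sc R" using sc_sym[of a u R] sc_sym[of a v R] by auto
    show "?C'``{a} = ?C``{a}"
      using nu nv by (auto simp: memC memC' sc_insert_char)
  qed
  have cls_in: "\<And>a. a \<in> U \<Longrightarrow> ?C'``{a} = U"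
  proof -
    fix a assume a: "a \<in> U"
    have aD: "a \<in> D" using a UD by auto
    have a2: "(u,a) \<in> sc R \<or> (v,a) \<in> sc R" using a unfolding U_def Cu_def Cv_def by (auto simp: eqc_def)
    have "(a,u) \<in> sc (insert (u,v) R)" "(a,v) \<in> sc (insert (u,v) R)"
      using a2 sc_sym[of u a R] sc_sym[of v a R] by (auto simp: sc_insert_char)
    then have au: "(a,u) \<in> ?C'" and av: "(a,v) \<in> ?C'" using aD uD vD by (auto simp: eqc_def)
    have eqa: "?C'``{a} = ?C'``{u}" using au equiv_class_eq[OF equiv_eqc] by metis
    show "?C'``{a} = U"
    proof
      show "?C'``{a} \<subseteq> U"
      proof
        fix b assume "b \<in> ?C'``{a}"
        then have "(u,b) \<in> ?C'" using eqa by auto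
        then have "bD": "b \<in> D" and "(u,b) \<in> sc R \<or> (u,u) \<in> sc R \<and> (v,b) \<in> sc R \<or> (u,v) \<in> sc R \<and> (u,b) \<in> sc R"
          by (auto simp: eqc_def sc_insert_char)
        then have "(u,b) \<in> sc R \<or> (v,b) \<in> sc R" by blast
        then show "b \<in> U" unfolding U_def Cu_def Cv_def using bD uD vD by (auto simp: eqc_def)
      qed
      show "U \<subseteq> ?C'``{a}"
      proof
        fix b assume b: "b \<in> U"
        then have bD: "b \<in> D" using UD by auto
        have "(u,b) \<in> sc R \<or> (v,b) \<in> sc R" using b unfolding U_def Cu_def Cv_def by (auto simp: eqc_def)
        then have "(u,b) \<in> sc (insert (u,v) R)" by (auto simp: sc_insert_char)
        then have "(u,b) \<in> ?C'" using bD uD by (auto simp: eqc_def)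
        then show "b \<in> ?C'``{a}" using eqa by auto
      qed
    qed
  qed
  have q2: "D // ?C' = insert U W"
  proof -
    have e: "U \<union> (D - U) = D" using UD by auto
    have qq: "D // ?C' = (\<lambda>a. ?C'``{a}) ` (U \<union> (D - U))" unfolding e quotient_def by auto
    have "(\<lambda>a. ?C'``{a}) ` (U \<union> (D - U)) = insert U W"
    proof -
      have "u \<in> U" unfolding U_def Cu_def using uD by (auto simp: eqc_def)
      then have "U \<noteq> {}" by auto
      then have i1: "(\<lambda>a. ?C'``{a}) ` U = {U}" using cls_in by auto
      have i2: "(\<lambda>a. ?C'``{a}) ` (D - U) = W" unfolding W_def using cls_out by auto
      show ?thesis unfolding image_Un i1 i2 by auto
    qed
    then show ?thesis using qq by simp
  qed
  have disjW: "\<And>X. X \<in> W \<Longrightarrow> X \<inter> U = {}"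
  proof -
    fix X assume "X \<in> W"
    then obtain a where a: "a \<in> D - U" and X: "X = ?C``{a}" unfolding W_def by auto
    show "X \<inter> U = {}"
    proof (rule ccontr)
      assume "X \<inter> U \<noteq> {}"
      then obtain b where "(a,b) \<in> ?C" "b \<in> U" using X by auto
      then have b1: "(a,b) \<in> sc R" and "(u,b) \<in> sc R \<or> (v,b) \<in> sc R" unfolding U_def Cu_def Cv_def by (auto simp: eqc_def)
      then have "(u,a) \<in> sc R \<or> (v,a) \<in> sc R" using sc_sym[of a b R] sc_trans[of u b R a] sc_trans[of v b R a] by blast
      then show False using a uD vD unfolding U_def Cu_def Cv_def by (auto simp: eqc_def)
    qed
  qed
  have neU: "u \<in> Cu" "v \<in> Cv" unfolding Cu_def Cv_def using uD vD by (auto simp: eqc_def)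
  have CuU: "u \<in> U" "v \<in> U" unfolding U_def using neU by auto
  have nW: "Cu \<notin> W" "Cv \<notin> W" "U \<notin> W"
  proof -
    show "Cu \<notin> W" proof assume "Cu \<in> W" then have "Cu \<inter> U = {}" by (rule disjW) then show False using neU CuU by auto qed
    show "Cv \<notin> W" proof assume "Cv \<in> W" then have "Cv \<inter> U = {}" by (rule disjW) then show False using neU CuU by auto qed
    show "U \<notin> W" proof assume "U \<in> W" then have "U \<inter> U = {}" by (rule disjW) then show False using neU CuU by auto qed
  qed
  have "Cu \<noteq> Cv"
  proof
    assume "Cu = Cv"
    then have "v \<in> Cu" unfolding Cv_def using vD by (auto simp: eqc_def)
    then show False using nr unfolding Cu_def by auto
  qed
  have finW: "finite W" unfolding W_def using fin by auto
  have f2: "finite (insert Cv W)" using finW by blast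
  have n1: "Cu \<notin> insert Cv W" using nW \<open>Cu \<noteq> Cv\<close> by blast
  have c0: "card (insert Cv W) = Suc (card W)" using card_insert_disjoint[OF finW nW(2)] .
  have c1: "card (insert Cu (insert Cv W)) = card W + 2"
    using card_insert_disjoint[OF f2 n1] c0 by linarith
  have c2: "card (insert U W) = card W + 1"
    using card_insert_disjoint[OF finW nW(3)] by linarith
  have e1: "ncls D R = card W + 2" unfolding ncls_def by (subst q1) (rule c1)
  have e2: "ncls D (insert (u,v) R) = card W + 1" unfolding ncls_def by (subst q2) (rule c2)
  show ?thesis using e1 e2 by linarith
qed



definition gr :: "'a set \<Rightarrow> ('a \<Rightarrow> 'a) \<Rightarrow> ('a \<times> 'a) set" where
  "gr D f = (\<lambda>z. (z, f z)) ` D"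

definition cyc :: "'a set \<Rightarrow> ('a \<Rightarrow> 'a) \<Rightarrow> nat" where
  "cyc D f = ncls D (gr D f)"

lemma funpow_in: "bij_betw f D D \<Longrightarrow> z \<in> D \<Longrightarrow> (f ^^ n) z \<in> D"
  using bij_betw_funpow[of f D n] bij_betwE by blast

lemma period_ex:
  assumes fin: "finite D" and bij: "bij_betw f D D" and z: "z \<in> D"
  shows "\<exists>n>0. (f ^^ n) z = z"
proof -
  let ?g = "\<lambda>i. (f ^^ i) z"
  have "\<not> inj_on ?g {..card D}"
  proof
    assume inj: "inj_on ?g {..card D}"
    have "?g ` {..card D} \<subseteq> D" using funpow_in[OF bij z] by auto
    then have "card {..card D} \<le> card D" using card_inj_on_le[OF inj _ fin] by blast
    then show False by simp
  qed
  then obtain i j where ij0: "i \<in> {..card D}" "j \<in> {..card D}" "?g i = ?g j" "i \<noteq> j"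
    unfolding inj_on_def by blast
  then have ij: "i \<noteq> j" "?g i = ?g j" by auto
  have gen: "\<exists>n>0. (f ^^ n) z = z" if "i < j" "?g i = ?g j" for i j
  proof -
    have e: "(f ^^ (i + (j - i))) z = (f ^^ i) ((f ^^ (j - i)) z)" by (simp only: funpow_add o_apply)
    have "i + (j - i) = j" using that(1) by simp
    then have "(f ^^ i) ((f ^^ (j - i)) z) = (f ^^ j) z" using e by simp
    also have "\<dots> = (f ^^ i) z" using that(2) by simp
    finally have "(f ^^ i) ((f ^^ (j - i)) z) = (f ^^ i) z" .
    moreover have "inj_on (f ^^ i) D" using bij_betw_funpow[OF bij] bij_betw_imp_inj_on by blast
    ultimately have "(f ^^ (j - i)) z = z" using funpow_in[OF bij z] z unfolding inj_on_def by blast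
    then show ?thesis using that(1) by (intro exI[of _ "j - i"]) auto
  qed
  show ?thesis
  proof (cases "i < j")
    case True then show ?thesis using gen ij(2) by blast
  next
    case False then have "j < i" using ij(1) by auto
    then show ?thesis using gen[of j i] ij(2) by simp
  qed
qed

lemma cycle_back:
  assumes fin: "finite D" and bij: "bij_betw f D D" and z: "z \<in> D"
    and R: "\<And>i. (f ^^ i) z \<noteq> z \<Longrightarrow> ((f ^^ i) z, f ((f ^^ i) z)) \<in> R"
  shows "(f z, z) \<in> R\<^sup>*"
proof -
  obtain n where n: "n > 0" "(f ^^ n) z = z" using period_ex[OF fin bij z] by blast
  have "\<forall>i. (f z, (f ^^ Suc i) z) \<in> R\<^sup>* \<or> (f z, z) \<in> R\<^sup>*"
  proof
    fix i show "(f z, (f ^^ Suc i) z) \<in> R\<^sup>* \<or> (f z, z) \<in> R\<^sup>*"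
    proof (induction i)
      case 0 then show ?case by simp
    next
      case (Suc i)
      show ?case
      proof (cases "(f z, z) \<in> R\<^sup>*")
        case True then show ?thesis by simp
      next
        case False
        then have h: "(f z, (f ^^ Suc i) z) \<in> R\<^sup>*" using Suc by simp
        show ?thesis
        proof (cases "(f ^^ Suc i) z = z")
          case True then show ?thesis using h by simp
        next
          case False
          then have "((f ^^ Suc i) z, f ((f ^^ Suc i) z)) \<in> R" using R by blast
          then have "(f z, f ((f ^^ Suc i) z)) \<in> R\<^sup>*" by (rule rtrancl_into_rtrancl[OF h])
          then show ?thesis by simp
        qed
      qed
    qed
  qed
  then have "(f z, (f ^^ Suc (n - 1)) z) \<in> R\<^sup>* \<or> (f z, z) \<in> R\<^sup>*" by blast
  then show ?thesis using n by simp
qed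

lemma cycle_back_sc:
  assumes fin: "finite D" and bij: "bij_betw f D D" and z: "z \<in> D"
    and R: "\<And>i. (f ^^ i) z \<noteq> z \<Longrightarrow> ((f ^^ i) z, f ((f ^^ i) z)) \<in> R"
  shows "(z, f z) \<in> sc R"
proof -
  have "(f z, z) \<in> R\<^sup>*" by (rule cycle_back[OF fin bij z R])
  then have "(f z, z) \<in> sc R" unfolding sc_def using rtrancl_mono[of R "R \<union> R\<inverse>"] by blast
  then show ?thesis by (rule sc_sym)
qed

lemma iter_sc: "bij_betw f D D \<Longrightarrow> z \<in> D \<Longrightarrow> (z, (f ^^ n) z) \<in> sc (gr D f)"
proof (induction n)
  case 0 then show ?case by simp
next
  case (Suc n)
  have "((f ^^ n) z, f ((f ^^ n) z)) \<in> gr D f"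
    unfolding gr_def using funpow_in[OF Suc.prems] by blast
  then have "((f ^^ n) z, (f ^^ Suc n) z) \<in> sc (gr D f)" using sc_base by simp
  then show ?case using Suc sc_trans[of z "(f ^^ n) z" "gr D f" "(f ^^ Suc n) z"] by blast
qed

lemma orb_class:
  assumes fin: "finite D" and bij: "bij_betw f D D" and d: "d \<in> D"
  shows "orb f d = eqc D (gr D f) `` {d}"
proof
  show "orb f d \<subseteq> eqc D (gr D f) `` {d}"
    unfolding orb_def eqc_def using iter_sc[OF bij d] funpow_in[OF bij d] d by auto
  show "eqc D (gr D f) `` {d} \<subseteq> orb f d"
  proof
    fix w assume "w \<in> eqc D (gr D f) `` {d}"
    then have "(d, w) \<in> (gr D f \<union> (gr D f)\<inverse>)\<^sup>*" unfolding eqc_def sc_def by auto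
    then show "w \<in> orb f d"
    proof (induction rule: rtrancl_induct)
      case base then show ?case unfolding orb_def by (auto intro: exI[of _ 0])
    next
      case (step b c)
      from step.IH obtain k where k: "b = (f ^^ k) d" unfolding orb_def by auto
      from step.hyps(2) show ?case
      proof
        assume "(b, c) \<in> gr D f"
        then have "c = f b" unfolding gr_def by auto
        then have "c = (f ^^ Suc k) d" using k by simp
        then show ?thesis unfolding orb_def by blast
      next
        assume "(b, c) \<in> (gr D f)\<inverse>"
        then have cD: "c \<in> D" and bc: "b = f c" unfolding gr_def by auto
        obtain m where m: "m > 0" "(f ^^ m) c = c" using period_ex[OF fin bij cD] by blast
        have "(f ^^ m) c = (f ^^ (m - 1)) (f c)"
          using m(1) by (metis Suc_diff_1 funpow_Suc_right o_apply)
        then have "c = (f ^^ (m - 1)) ((f ^^ k) d)" using m(2) bc k by simp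
        then have "c = (f ^^ (m - 1 + k)) d" by (simp add: funpow_add)
        then show ?thesis unfolding orb_def by blast
      qed
    qed
  qed
qed

lemma orb_quotient:
  assumes fin: "finite D" and bij: "bij_betw f D D"
  shows "orb f ` D = D // eqc D (gr D f)"
  unfolding quotient_def using orb_class[OF fin bij] by auto

lemma card_orbs: 
  assumes fin: "finite D" and bij: "bij_betw f D D"
  shows "card (orb f ` D) = cyc D f"
  unfolding cyc_def ncls_def orb_quotient[OF fin bij] ..



lemma sc_incl: "R \<subseteq> sc R"
proof
  fix p assume "p \<in> R" then show "p \<in> sc R" by (cases p) (auto intro: sc_base)
qed

lemma swap_bij:
  assumes "x \<in> D" "y \<in> D"
  shows "bij_betw (\<lambda>z. if z = x then y else if z = y then x else z) D D"
  by (rule bij_betw_byWitness[where f'="\<lambda>z. if z = x then y else if z = y then x else z"])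
     (use assms in auto)

lemma swap_cyc:
  assumes fin: "finite D" and bij: "bij_betw r D D" and x: "x \<in> D" and y: "y \<in> D" and xy: "x \<noteq> y"
  shows "cyc D (\<lambda>z. if z = x then r y else if z = y then r x else r z) \<le> cyc D r + 1"
    and "(x,y) \<notin> eqc D (gr D r) \<Longrightarrow> cyc D (\<lambda>z. if z = x then r y else if z = y then r x else r z) + 1 = cyc D r"
proof -
  define r' where "r' = (\<lambda>z. if z = x then r y else if z = y then r x else r z)"
  have r'c: "r' = r \<circ> (\<lambda>z. if z = x then y else if z = y then x else z)"
    unfolding r'_def by auto
  have bij': "bij_betw r' D D" unfolding r'c using swap_bij[OF x y] bij by (rule bij_betw_trans)
  define R0 where "R0 = (\<lambda>w. (w, r w)) ` (D - {x,y})"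
  have R0g: "R0 \<subseteq> gr D r" unfolding R0_def gr_def by auto
  have rD: "r x \<in> D" "r y \<in> D" using bij x y bij_betwE by blast+
  have e1: "cyc D r = ncls D (insert (x, r x) R0)"
    unfolding cyc_def
  proof (rule ncls_cong)
    show "insert (x, r x) R0 \<subseteq> sc (gr D r)"
      using R0g x sc_base[where R="gr D r"] unfolding gr_def by blast
    have yy: "(y, r y) \<in> sc (insert (x, r x) R0)"
    proof (rule cycle_back_sc[OF fin bij y])
      fix i assume "(r ^^ i) y \<noteq> y"
      moreover have "(r ^^ i) y \<in> D" using funpow_in[OF bij y] .
      ultimately show "((r ^^ i) y, r ((r ^^ i) y)) \<in> insert (x, r x) R0"
        unfolding R0_def by auto
    qed
    show "gr D r \<subseteq> sc (insert (x, r x) R0)"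
    proof
      fix p assume "p \<in> gr D r"
      then obtain w where w: "w \<in> D" "p = (w, r w)" unfolding gr_def by auto
      show "p \<in> sc (insert (x, r x) R0)"
      proof (cases "w = y")
        case True then show ?thesis using yy w by simp
      next
        case False
        then have "p \<in> insert (x, r x) R0" using w unfolding R0_def by auto
        then show ?thesis unfolding w(2) by (rule sc_base)
      qed
    qed
  qed
  have e2: "cyc D r' = ncls D (insert (x, r y) R0)"
    unfolding cyc_def
  proof (rule ncls_cong)
    have g1: "(x, r y) \<in> gr D r'" unfolding gr_def r'_def using x by (auto intro!: image_eqI[of _ _ x])
    have g2: "R0 \<subseteq> gr D r'"
    proof
      fix p assume "p \<in> R0"
      then obtain w where "w \<in> D" "w \<noteq> x" "w \<noteq> y" "p = (w, r w)" unfolding R0_def by auto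
      then show "p \<in> gr D r'" unfolding gr_def r'_def by (auto intro!: image_eqI[of _ _ w])
    qed
    have "insert (x, r y) R0 \<subseteq> gr D r'" using g1 g2 by blast
    then show "insert (x, r y) R0 \<subseteq> sc (gr D r')"
      using sc_incl[of "gr D r'"] by (rule subset_trans)
    have yy: "(y, r' y) \<in> sc (insert (x, r y) R0)"
    proof (rule cycle_back_sc[OF fin bij' y])
      fix i assume "(r' ^^ i) y \<noteq> y"
      moreover have "(r' ^^ i) y \<in> D" using funpow_in[OF bij' y] .
      ultimately show "((r' ^^ i) y, r' ((r' ^^ i) y)) \<in> insert (x, r y) R0"
        unfolding R0_def r'_def by auto
    qed
    show "gr D r' \<subseteq> sc (insert (x, r y) R0)"
    proof
      fix p assume "p \<in> gr D r'"
      then obtain w where w: "w \<in> D" "p = (w, r' w)" unfolding gr_def by auto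
      show "p \<in> sc (insert (x, r y) R0)"
      proof (cases "w = y")
        case True then show ?thesis using yy w by simp
      next
        case False
        then have "p \<in> insert (x, r y) R0" using w unfolding R0_def r'_def by auto
        then show ?thesis unfolding w(2) by (rule sc_base)
      qed
    qed
  qed
  have b1: "ncls D R0 \<le> cyc D r + 1"
  proof (cases "(x, r x) \<in> eqc D R0")
    case True then show ?thesis using e1 ncls_insert_rel[OF True] by simp
  next
    case False then show ?thesis using e1 ncls_insert_unrel[OF fin x rD(1) False] by simp
  qed
  have b2: "cyc D r' \<le> ncls D R0"
  proof (cases "(x, r y) \<in> eqc D R0")
    case True then show ?thesis using e2 ncls_insert_rel[OF True] by simp
  next
    case False then show ?thesis using e2 ncls_insert_unrel[OF fin x rD(2) False] by simp
  qed
  show "cyc D (\<lambda>z. if z = x then r y else if z = y then r x else r z) \<le> cyc D r + 1"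
    using b1 b2 unfolding r'_def by simp
  assume nr: "(x,y) \<notin> eqc D (gr D r)"
  have scg: "sc R0 \<subseteq> sc (gr D r)" using R0g by (rule sc_mono)
  have xx: "(x, r x) \<in> sc R0"
  proof (rule cycle_back_sc[OF fin bij x])
    fix i assume ne: "(r ^^ i) x \<noteq> x"
    have inD: "(r ^^ i) x \<in> D" using funpow_in[OF bij x] .
    have "(x, (r ^^ i) x) \<in> sc (gr D r)" by (rule iter_sc[OF bij x])
    then have "(r ^^ i) x \<noteq> y" using nr x y unfolding eqc_def by auto
    then show "((r ^^ i) x, r ((r ^^ i) x)) \<in> R0" using ne inD unfolding R0_def by auto
  qed
  then have xxe: "(x, r x) \<in> eqc D R0" using x rD unfolding eqc_def by auto
  have nxy: "(x, r y) \<notin> eqc D R0"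
  proof
    assume "(x, r y) \<in> eqc D R0"
    then have "(x, r y) \<in> sc (gr D r)" using scg unfolding eqc_def by auto
    moreover have "(y, r y) \<in> gr D r" unfolding gr_def using y by auto
    then have "(r y, y) \<in> sc (gr D r)" by (rule sc_base')
    ultimately have "(x, y) \<in> sc (gr D r)" by (rule sc_trans)
    then show False using nr x y unfolding eqc_def by auto
  qed
  show "cyc D (\<lambda>z. if z = x then r y else if z = y then r x else r z) + 1 = cyc D r"
    using e1 e2 ncls_insert_rel[OF xxe] ncls_insert_unrel[OF fin x rD(2) nxy] unfolding r'_def by simp
qed



definition aS :: "('a \<Rightarrow> 'a) \<Rightarrow> 'a set \<Rightarrow> 'a \<Rightarrow> 'a" where
  "aS al S = (\<lambda>z. if z \<in> S then al z else z)"

definition aclosed :: "('a \<Rightarrow> 'a) \<Rightarrow> 'a set \<Rightarrow> bool" where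
  "aclosed al S \<longleftrightarrow> (\<forall>z\<in>S. al z \<in> S)"

definition gfun :: "'a set \<Rightarrow> ('a \<Rightarrow> 'a) \<Rightarrow> ('a \<Rightarrow> 'a) \<Rightarrow> 'a set \<Rightarrow> int" where
  "gfun D p al S = 4 * int (ncls D (gr D p \<union> gr D (aS al S))) + int (card S) - 2 * int (cyc D (p \<circ> aS al S))"

lemma gr_cong: "(\<And>z. z \<in> D \<Longrightarrow> f z = g z) \<Longrightarrow> gr D f = gr D g"
  unfolding gr_def by auto

lemma cyc_cong: "(\<And>z. z \<in> D \<Longrightarrow> f z = g z) \<Longrightarrow> cyc D f = cyc D g"
  unfolding cyc_def using gr_cong by metis

lemma aS_bij:
  assumes inv: "\<forall>d\<in>D. al d \<in> D \<and> al d \<noteq> d \<and> al (al d) = d" and cl: "aclosed al S"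
  shows "bij_betw (aS al S) D D"
  by (rule bij_betw_byWitness[where f'="aS al S"]) (use inv cl in \<open>auto simp: aS_def aclosed_def\<close>)

lemma gfun_step:
  assumes fin: "finite D" and bij: "bij_betw p D D"
    and inv: "\<forall>d\<in>D. al d \<in> D \<and> al d \<noteq> d \<and> al (al d) = d"
    and SD: "S \<subseteq> D" and cl: "aclosed al S" and x: "x \<in> D" "x \<notin> S"
  shows "gfun D p al S \<le> gfun D p al (insert x (insert (al x) S))"
proof -
  define y where "y = al x"
  have y: "y \<in> D" "y \<notin> S" "x \<noteq> y" "al y = x"
    using inv x cl unfolding y_def aclosed_def by metis+
  define S' where "S' = insert x (insert y S)"
  define r where "r = p \<circ> aS al S"
  have bijr: "bij_betw r D D" unfolding r_def using aS_bij[OF inv cl] bij by (rule bij_betw_trans)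
  define r' where "r' = (\<lambda>z. if z = x then r y else if z = y then r x else r z)"
  have cyc': "cyc D (p \<circ> aS al S') = cyc D r'"
    by (rule cyc_cong) (use x y y_def in \<open>auto simp: r'_def r_def aS_def S'_def\<close>)
  have finS: "finite S" using SD fin finite_subset by blast
  have cardS': "card S' = card S + 2" unfolding S'_def using finS x y by simp
  define Rb where "Rb = gr D p \<union> gr D (aS al S)"
  have ncls': "ncls D (gr D p \<union> gr D (aS al S')) = ncls D (insert (x,y) Rb)"
  proof (rule ncls_cong)
    show "gr D p \<union> gr D (aS al S') \<subseteq> sc (insert (x, y) Rb)"
    proof
      fix q assume "q \<in> gr D p \<union> gr D (aS al S')"
      then show "q \<in> sc (insert (x, y) Rb)"
      proof
        assume "q \<in> gr D p" then have "q \<in> insert (x, y) Rb" unfolding Rb_def by auto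
        then show ?thesis using sc_incl by blast
      next
        assume "q \<in> gr D (aS al S')"
        then obtain z where z: "z \<in> D" "q = (z, aS al S' z)" unfolding gr_def by auto
        consider "z = x" | "z = y" | "z \<noteq> x" "z \<noteq> y" by blast
        then show ?thesis
        proof cases
          case 1 then have "q = (x, y)" using z unfolding aS_def S'_def y_def by simp
          then show ?thesis using sc_base[of x y "insert (x,y) Rb"] by simp
        next
          case 2 then have "q = (y, x)" using z y unfolding aS_def S'_def by simp
          then show ?thesis using sc_base'[of x y "insert (x,y) Rb"] by simp
        next
          case 3 then have "q = (z, aS al S z)" using z unfolding aS_def S'_def by simp
          then have "q \<in> insert (x, y) Rb" unfolding Rb_def gr_def using z by auto
          then show ?thesis using sc_incl by blast
        qed
      qed
    qed
    show "insert (x, y) Rb \<subseteq> sc (gr D p \<union> gr D (aS al S'))"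
    proof
      fix q assume q: "q \<in> insert (x, y) Rb"
      consider "q = (x, y)" | "q \<in> gr D p" | "q \<in> gr D (aS al S)" using q unfolding Rb_def by auto
      then show "q \<in> sc (gr D p \<union> gr D (aS al S'))"
      proof cases
        case 1
        have "(x, aS al S' x) \<in> gr D (aS al S')" unfolding gr_def using x by auto
        then have "q \<in> gr D p \<union> gr D (aS al S')" using 1 unfolding aS_def S'_def y_def by simp
        then show ?thesis using sc_incl by blast
      next
        case 2 then show ?thesis using sc_incl by blast
      next
        case 3
        then obtain z where z: "z \<in> D" "q = (z, aS al S z)" unfolding gr_def by auto
        show ?thesis
        proof (cases "z = x \<or> z = y")
          case True then have "q = (z, z)" using z x y unfolding aS_def by auto
          then show ?thesis by simp
        next
          case False then have "q = (z, aS al S' z)" using z unfolding aS_def S'_def by simp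
          then have "q \<in> gr D p \<union> gr D (aS al S')" unfolding gr_def using z by auto
          then show ?thesis using sc_incl by blast
        qed
      qed
    qed
  qed
  have U1: "cyc D r' \<le> cyc D r + 1" unfolding r'_def by (rule swap_cyc(1)[OF fin bijr x(1) y(1) y(3)])
  have gS: "gfun D p al S = 4 * int (ncls D Rb) + int (card S) - 2 * int (cyc D r)"
    unfolding gfun_def Rb_def r_def ..
  have gS': "gfun D p al (insert x (insert (al x) S)) = 4 * int (ncls D (insert (x,y) Rb)) + int (card S) + 2 - 2 * int (cyc D r')"
    unfolding gfun_def y_def[symmetric] S'_def[symmetric] ncls' cyc' cardS' by simp
  show ?thesis
  proof (cases "(x, y) \<in> eqc D Rb")
    case True
    then have "ncls D (insert (x,y) Rb) = ncls D Rb" by (rule ncls_insert_rel)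
    then show ?thesis unfolding gS gS' using U1 by simp
  next
    case False
    then have c: "ncls D (insert (x,y) Rb) + 1 = ncls D Rb" by (rule ncls_insert_unrel[OF fin x(1) y(1)])
    have "gr D r \<subseteq> sc Rb"
    proof
      fix q assume "q \<in> gr D r"
      then obtain z where z: "z \<in> D" "q = (z, p (aS al S z))" unfolding gr_def r_def by auto
      have zD: "aS al S z \<in> D" using aS_bij[OF inv cl] z(1) bij_betwE by blast
      have "(z, aS al S z) \<in> Rb" unfolding Rb_def gr_def using z by auto
      moreover have "(aS al S z, p (aS al S z)) \<in> Rb" unfolding Rb_def gr_def using zD by auto
      ultimately show "q \<in> sc Rb" using z(2) sc_base sc_trans by metis
    qed
    then have "sc (gr D r) \<subseteq> sc Rb" by (rule sc_sub)
    then have "(x, y) \<notin> eqc D (gr D r)" using False unfolding eqc_def by auto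
    then have "cyc D r' + 1 = cyc D r" unfolding r'_def by (rule swap_cyc(2)[OF fin bijr x(1) y(1) y(3)])
    then show ?thesis unfolding gS gS' using c by simp
  qed
qed

lemma gfun_mono:
  assumes fin: "finite D" and bij: "bij_betw p D D"
    and inv: "\<forall>d\<in>D. al d \<in> D \<and> al d \<noteq> d \<and> al (al d) = d"
  shows "S \<subseteq> T \<Longrightarrow> T \<subseteq> D \<Longrightarrow> aclosed al S \<Longrightarrow> aclosed al T \<Longrightarrow> gfun D p al S \<le> gfun D p al T"
proof (induction "card (T - S)" arbitrary: S rule: less_induct)
  case less
  show ?case
  proof (cases "S = T")
    case True then show ?thesis by simp
  next
    case False
    then obtain x where x: "x \<in> T" "x \<notin> S" using less.prems(1) by blast
    define S1 where "S1 = insert x (insert (al x) S)"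
    have xD: "x \<in> D" using x less.prems(2) by auto
    have axT: "al x \<in> T" using x less.prems(4) unfolding aclosed_def by auto
    have cl1: "aclosed al S1" using less.prems(3) inv xD unfolding S1_def aclosed_def by auto
    have sub1: "S1 \<subseteq> T" using less.prems(1) x axT unfolding S1_def by auto
    have finT: "finite T" using less.prems(2) fin finite_subset by blast
    have "T - S1 \<subset> T - S" unfolding S1_def using x by auto
    then have lt: "card (T - S1) < card (T - S)" using finT by (meson finite_Diff psubset_card_mono)
    have "gfun D p al S \<le> gfun D p al S1" unfolding S1_def
      by (rule gfun_step[OF fin bij inv _ less.prems(3) xD x(2)]) (use less.prems in auto)
    also have "\<dots> \<le> gfun D p al T" by (rule less.hyps[OF lt sub1 less.prems(2) cl1 less.prems(4)])
    finally show ?thesis .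
  qed
qed

lemma genus_zero_sub:
  assumes fin: "finite D" and bij: "bij_betw p D D"
    and inv: "\<forall>d\<in>D. al d \<in> D \<and> al d \<noteq> d \<and> al (al d) = d"
    and conn: "ncls D (gr D p \<union> gr D al) = 1"
    and euler: "2 * int (cyc D p) + 2 * int (cyc D (p \<circ> al)) = int (card D) + 4"
    and SD: "S \<subseteq> D" and cl: "aclosed al S"
  shows "4 * int (ncls D (gr D p \<union> gr D (aS al S))) + int (card S) = 2 * int (cyc D p) + 2 * int (cyc D (p \<circ> aS al S))"
proof -
  have a0: "aS al {} = (\<lambda>z. z)" unfolding aS_def by auto
  have "ncls D (gr D p \<union> gr D (aS al {})) = ncls D (gr D p)"
  proof (rule ncls_cong)
    show "gr D p \<union> gr D (aS al {}) \<subseteq> sc (gr D p)"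
      using sc_incl[of "gr D p"] unfolding a0 gr_def by auto
    show "gr D p \<subseteq> sc (gr D p \<union> gr D (aS al {}))"
      using sc_incl[of "gr D p \<union> gr D (aS al {})"] by auto
  qed
  then have g0: "gfun D p al {} = 2 * int (cyc D p)" unfolding gfun_def cyc_def a0 by (simp add: o_def)
  have gD1: "gr D (aS al D) = gr D al" by (rule gr_cong) (simp add: aS_def)
  have gD2: "cyc D (p \<circ> aS al D) = cyc D (p \<circ> al)" by (rule cyc_cong) (simp add: aS_def)
  have gD: "gfun D p al D = 2 * int (cyc D p)" unfolding gfun_def gD1 gD2 conn using euler by simp
  have cl0: "aclosed al {}" "aclosed al D" using inv unfolding aclosed_def by auto
  have "gfun D p al {} \<le> gfun D p al S" by (rule gfun_mono[OF fin bij inv]) (use SD cl cl0 in auto)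
  moreover have "gfun D p al S \<le> gfun D p al D" by (rule gfun_mono[OF fin bij inv]) (use SD cl cl0 in auto)
  ultimately have "gfun D p al S = 2 * int (cyc D p)" using g0 gD by simp
  then show ?thesis unfolding gfun_def by simp
qed



lemma orb_inv:
  assumes "al (al d) = d"
  shows "orb al d = {d, al d}"
proof -
  have it: "(al ^^ n) d = (if even n then d else al d)" for n
    by (induction n) (use assms in auto)
  show ?thesis unfolding orb_def it
    by (auto intro: exI[of _ "0::nat"] exI[of _ "1::nat"] split: if_splits)
qed

lemma sc_respect:
  assumes "\<And>a b. (a,b) \<in> R \<Longrightarrow> f a = f b" and "(a,b) \<in> sc R"
  shows "f a = f b"
proof -
  have "(a,b) \<in> (R \<union> R\<inverse>)\<^sup>*" using assms(2) unfolding sc_def .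
  then show ?thesis
  proof (induction rule: rtrancl_induct)
    case base then show ?case by simp
  next
    case (step b c) then show ?case using assms(1) by auto
  qed
qed

lemma card_invariant_funs:
  fixes Q :: "'b set" and D :: "'a set"
  assumes fin: "finite D" and eq: "equiv D r"
  shows "card {f \<in> D \<rightarrow>\<^sub>E Q. \<forall>a b. (a,b) \<in> r \<longrightarrow> f a = f b} = card Q ^ card (D // r)"
proof -
  define Phi :: "('a set \<Rightarrow> 'b) \<Rightarrow> 'a \<Rightarrow> 'b" where "Phi = (\<lambda>g. restrict (\<lambda>x. g (r``{x})) D)"
  define B where "B = {f \<in> D \<rightarrow>\<^sub>E Q. \<forall>a b. (a,b) \<in> r \<longrightarrow> f a = f b}"
  have finq: "finite (D // r)" using fin by (rule finite_quotient) (use eq in \<open>simp add: equiv_def refl_on_def\<close>)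
  have inj: "inj_on Phi (D // r \<rightarrow>\<^sub>E Q)"
  proof (rule inj_onI)
    fix g1 g2 assume g: "g1 \<in> D // r \<rightarrow>\<^sub>E Q" "g2 \<in> D // r \<rightarrow>\<^sub>E Q" and e: "Phi g1 = Phi g2"
    show "g1 = g2"
    proof (rule extensionalityI[of _ "D // r"])
      show "g1 \<in> extensional (D // r)" "g2 \<in> extensional (D // r)" using g by (auto simp: PiE_def)
      fix C assume "C \<in> D // r"
      then obtain x where x: "x \<in> D" "C = r``{x}" by (auto elim: quotientE)
      have "Phi g1 x = Phi g2 x" using e by simp
      then show "g1 C = g2 C" using x unfolding Phi_def by simp
    qed
  qed
  have img: "Phi ` (D // r \<rightarrow>\<^sub>E Q) = B"
  proof
    show "Phi ` (D // r \<rightarrow>\<^sub>E Q) \<subseteq> B"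
    proof
      fix f assume "f \<in> Phi ` (D // r \<rightarrow>\<^sub>E Q)"
      then obtain g where g: "g \<in> D // r \<rightarrow>\<^sub>E Q" "f = Phi g" by auto
      have "\<forall>x\<in>D. g (r``{x}) \<in> Q"
      proof
        fix x assume "x \<in> D" then have "r``{x} \<in> D // r" by (rule quotientI)
        then show "g (r``{x}) \<in> Q" using g(1) by (auto simp: PiE_def Pi_def)
      qed
      then have "f \<in> D \<rightarrow>\<^sub>E Q" unfolding g(2) Phi_def restrict_PiE_iff .
      moreover have "\<forall>a b. (a,b) \<in> r \<longrightarrow> f a = f b"
      proof (intro allI impI)
        fix a b assume ab: "(a,b) \<in> r"
        have "a \<in> D" "b \<in> D" using equiv_type[OF eq] ab by auto
        moreover have "r``{a} = r``{b}" using equiv_class_eq[OF eq ab] .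
        ultimately show "f a = f b" using g unfolding Phi_def by simp
      qed
      ultimately show "f \<in> B" unfolding B_def by blast
    qed
    show "B \<subseteq> Phi ` (D // r \<rightarrow>\<^sub>E Q)"
    proof
      fix f assume f: "f \<in> B"
      have fr: "\<forall>a b. (a,b) \<in> r \<longrightarrow> f a = f b" and fP: "f \<in> D \<rightarrow>\<^sub>E Q" using f unfolding B_def by blast+
      define g where "g = restrict (\<lambda>C. f (SOME x. x \<in> C)) (D // r)"
      have some: "(SOME y. y \<in> r``{x}) \<in> r``{x}" if "x \<in> D" for x
        using equiv_class_self[OF eq that] by (rule someI)
      have gx: "g (r``{x}) = f x" if x: "x \<in> D" for x
      proof -
        have "(x, SOME y. y \<in> r``{x}) \<in> r" using some[OF x] by simp
        then have "f x = f (SOME y. y \<in> r``{x})" using fr by blast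
        moreover have "r``{x} \<in> D // r" using x by (rule quotientI)
        ultimately show ?thesis unfolding g_def by simp
      qed
      have "g \<in> D // r \<rightarrow>\<^sub>E Q"
      proof
        fix C assume "C \<in> D // r"
        then obtain x where x: "x \<in> D" "C = r``{x}" by (auto elim: quotientE)
        have "f x \<in> Q" using fP x(1) by (auto simp: PiE_def Pi_def)
        then show "g C \<in> Q" using gx[OF x(1)] x(2) by simp
      next
        fix C assume "C \<notin> D // r" then show "g C = undefined" unfolding g_def by simp
      qed
      moreover have "Phi g = f"
      proof (rule extensionalityI[of _ D])
        show "Phi g \<in> extensional D" unfolding Phi_def by simp
        show "f \<in> extensional D" using fP by (auto simp: PiE_def)
        fix x assume "x \<in> D" then show "Phi g x = f x" unfolding Phi_def using gx by simp
      qed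
      ultimately show "f \<in> Phi ` (D // r \<rightarrow>\<^sub>E Q)" by blast
    qed
  qed
  have "card B = card (D // r \<rightarrow>\<^sub>E Q)" using card_image[OF inj] img by simp
  also have "\<dots> = card Q ^ card (D // r)" using card_PiE[OF finq, of "\<lambda>_. Q"] by simp
  finally show ?thesis unfolding B_def .
qed



lemma orb_self: "d \<in> orb f d"
  unfolding orb_def by (auto intro: exI[of _ "0::nat"])

lemma orb_step: "f d \<in> orb f d"
  unfolding orb_def by (auto intro!: exI[of _ "1::nat"])

lemma orb_eq:
  assumes fin: "finite D" and bij: "bij_betw p D D" and d: "d \<in> D" and d': "d' \<in> orb p d"
  shows "orb p d' = orb p d" and "(d, d') \<in> eqc D (gr D p)"
proof -
  show de: "(d, d') \<in> eqc D (gr D p)" using d' orb_class[OF fin bij d] by auto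
  then have d'D: "d' \<in> D" unfolding eqc_def by auto
  show "orb p d' = orb p d"
    using orb_class[OF fin bij d] orb_class[OF fin bij d'D] equiv_class_eq[OF equiv_eqc de] by simp
qed

lemma count_agree:
  fixes Q :: "'c set" and D :: "'d set"
  assumes fin: "finite D" and bij: "bij_betw p D D"
    and inv: "\<forall>d\<in>D. al d \<in> D \<and> al d \<noteq> d \<and> al (al d) = d"
    and X: "X \<subseteq> orb al ` D"
  shows "card {s \<in> orb p ` D \<rightarrow>\<^sub>E Q. \<forall>e\<in>X. e \<notin> eta_primal D al p s}
         = card Q ^ ncls D (gr D p \<union> gr D (aS al (\<Union>X)))"
proof -
  define S where "S = \<Union>X"
  define R where "R = gr D p \<union> gr D (aS al S)"
  define r where "r = eqc D R"
  define A where "A = {s \<in> orb p ` D \<rightarrow>\<^sub>E Q. \<forall>e\<in>X. e \<notin> eta_primal D al p s}"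
  define B where "B = {f \<in> D \<rightarrow>\<^sub>E Q. \<forall>a b. (a,b) \<in> r \<longrightarrow> f a = f b}"
  define Phi :: "('d set \<Rightarrow> 'c) \<Rightarrow> 'd \<Rightarrow> 'c" where "Phi = (\<lambda>s. restrict (\<lambda>d. s (orb p d)) D)"
  have eqr: "equiv D r" unfolding r_def by (rule equiv_eqc)
  have o5: "z \<in> D \<and> orb al z = e" if eX: "e \<in> X" and ze: "z \<in> e" for e z
  proof -
    obtain d0 where d0: "d0 \<in> D" "e = orb al d0" using X eX by auto
    have e: "e = {d0, al d0}" using d0 inv orb_inv by metis
    then have zD: "z \<in> D" using ze d0(1) inv by auto
    have "orb al z = {z, al z}" using zD inv orb_inv by metis
    also have "\<dots> = e" using e ze d0(1) inv by auto
    finally show ?thesis using zD by simp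
  qed
  have eta_iff: "e \<notin> eta_primal D al p s \<longleftrightarrow> (\<forall>d\<in>D. orb al d = e \<longrightarrow> s (orb p d) = s (orb p (al d)))" for e s
    unfolding eta_primal_def by auto
  have gp_r: "(d, d') \<in> r" if "d \<in> D" "d' \<in> orb p d" for d d'
  proof -
    have "(d, d') \<in> eqc D (gr D p)" by (rule orb_eq(2)[OF fin bij that])
    moreover have "sc (gr D p) \<subseteq> sc R" unfolding R_def by (rule sc_mono) auto
    ultimately show ?thesis unfolding r_def eqc_def by auto
  qed
  have inj: "inj_on Phi A"
  proof (rule inj_onI)
    fix s1 s2 assume s: "s1 \<in> A" "s2 \<in> A" and e: "Phi s1 = Phi s2"
    show "s1 = s2"
    proof (rule extensionalityI[of _ "orb p ` D"])
      show "s1 \<in> extensional (orb p ` D)" "s2 \<in> extensional (orb p ` D)" using s unfolding A_def by (auto simp: PiE_def)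
      fix v assume "v \<in> orb p ` D"
      then obtain d where d: "d \<in> D" "v = orb p d" by auto
      have "Phi s1 d = Phi s2 d" using e by simp
      then show "s1 v = s2 v" using d unfolding Phi_def by simp
    qed
  qed
  have sub1: "Phi ` A \<subseteq> B"
  proof
    fix f assume "f \<in> Phi ` A"
    then obtain s where sA: "s \<in> A" and f: "f = Phi s" by auto
    have sP: "s \<in> orb p ` D \<rightarrow>\<^sub>E Q" and sc: "\<forall>e\<in>X. e \<notin> eta_primal D al p s" using sA unfolding A_def by auto
    have "\<forall>d\<in>D. s (orb p d) \<in> Q"
    proof
      fix d assume "d \<in> D" then have "orb p d \<in> orb p ` D" by auto
      then show "s (orb p d) \<in> Q" using sP by (auto simp: PiE_def Pi_def)
    qed
    then have fP: "f \<in> D \<rightarrow>\<^sub>E Q" unfolding f Phi_def restrict_PiE_iff .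
    have gen: "f a = f b" if ab: "(a,b) \<in> R" for a b
    proof -
      from ab consider "(a,b) \<in> gr D p" | "(a,b) \<in> gr D (aS al S)" unfolding R_def by auto
      then show ?thesis
      proof cases
        case 1
        then have a: "a \<in> D" "b = p a" unfolding gr_def by auto
        have bD: "b \<in> D" using a bij bij_betwE by blast
        have "orb p b = orb p a" using orb_eq(1)[OF fin bij a(1)] orb_step[of p a] a(2) by simp
        then show ?thesis using a(1) bD unfolding f Phi_def by simp
      next
        case 2
        then have a: "a \<in> D" "b = aS al S a" unfolding gr_def by auto
        show ?thesis
        proof (cases "a \<in> S")
          case False then show ?thesis using a unfolding aS_def by simp
        next
          case True
          then obtain e where e: "e \<in> X" "a \<in> e" unfolding S_def by auto
          have oa: "orb al a = e" using o5[OF e] by simp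
          have "s (orb p a) = s (orb p (al a))" using sc e(1) eta_iff oa a(1) by blast
          moreover have "b = al a" "al a \<in> D" using a True inv unfolding aS_def by auto
          ultimately show ?thesis using a(1) unfolding f Phi_def by simp
        qed
      qed
    qed
    have "\<forall>a b. (a,b) \<in> r \<longrightarrow> f a = f b"
    proof (intro allI impI)
      fix a b assume "(a,b) \<in> r"
      then have "(a,b) \<in> sc R" unfolding r_def eqc_def by auto
      then show "f a = f b" using sc_respect[of R f a b] gen by blast
    qed
    then show "f \<in> B" using fP unfolding B_def by blast
  qed
  have sub2: "B \<subseteq> Phi ` A"
  proof
    fix f assume f: "f \<in> B"
    have fr: "\<forall>a b. (a,b) \<in> r \<longrightarrow> f a = f b" and fP: "f \<in> D \<rightarrow>\<^sub>E Q" using f unfolding B_def by blast+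
    define s where "s = restrict (\<lambda>v. f (SOME d. d \<in> v)) (orb p ` D)"
    have sd: "s (orb p d) = f d" if d: "d \<in> D" for d
    proof -
      have "(SOME d'. d' \<in> orb p d) \<in> orb p d" using orb_self[of d p] by (rule someI)
      then have "(d, SOME d'. d' \<in> orb p d) \<in> r" using gp_r[OF d] by blast
      then have "f d = f (SOME d'. d' \<in> orb p d)" using fr by blast
      then show ?thesis unfolding s_def using d by simp
    qed
    have sP: "s \<in> orb p ` D \<rightarrow>\<^sub>E Q"
    proof
      fix v assume "v \<in> orb p ` D"
      then obtain d where d: "d \<in> D" "v = orb p d" by auto
      have "f d \<in> Q" using fP d(1) by (auto simp: PiE_def Pi_def)
      then show "s v \<in> Q" using sd[OF d(1)] d(2) by simp
    next
      fix v assume "v \<notin> orb p ` D" then show "s v = undefined" unfolding s_def by simp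
    qed
    have scn: "\<forall>e\<in>X. e \<notin> eta_primal D al p s"
    proof (intro ballI)
      fix e assume e: "e \<in> X"
      show "e \<notin> eta_primal D al p s"
        unfolding eta_iff
      proof (intro ballI impI)
        fix d assume d: "d \<in> D" and de: "orb al d = e"
        have "d \<in> S" using orb_self[of d al] de e unfolding S_def by auto
        then have "(d, al d) \<in> R" unfolding R_def gr_def aS_def using d by auto
        moreover have "al d \<in> D" using d inv by auto
        ultimately have "(d, al d) \<in> r" unfolding r_def eqc_def using d sc_base[of d "al d" R] by auto
        then have "f d = f (al d)" using fr by blast
        then show "s (orb p d) = s (orb p (al d))" using sd d inv by simp
      qed
    qed
    have "Phi s = f"
    proof (rule extensionalityI[of _ D])
      show "Phi s \<in> extensional D" unfolding Phi_def by simp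
      show "f \<in> extensional D" using fP by (auto simp: PiE_def)
      fix d assume "d \<in> D" then show "Phi s d = f d" unfolding Phi_def using sd by simp
    qed
    moreover have "s \<in> A" unfolding A_def using sP scn by blast
    ultimately show "f \<in> Phi ` A" by blast
  qed
  have "card A = card B" using card_image[OF inj] sub1 sub2 by (metis subset_antisym)
  also have "\<dots> = card Q ^ card (D // r)" unfolding B_def by (rule card_invariant_funs[OF fin eqr])
  finally show ?thesis unfolding A_def r_def R_def S_def ncls_def .
qed



lemma pm_basic:
  assumes "planar_map D al sg"
  shows "finite D" "D \<noteq> {}" "bij_betw sg D D" "bij_betw al D D"
    "\<forall>d\<in>D. al d \<in> D \<and> al d \<noteq> d \<and> al (al d) = d"
  using assms unfolding planar_map_def using bij_betwE by blast+

lemma edge_mem: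
  assumes inv: "\<forall>d\<in>D. al d \<in> D \<and> al d \<noteq> d \<and> al (al d) = d"
    and e: "e \<in> edges D al" and z: "z \<in> e"
  shows "z \<in> D" "orb al z = e"
proof -
  obtain d0 where d0: "d0 \<in> D" "e = orb al d0" using e unfolding edges_def by auto
  have ee: "e = {d0, al d0}" using d0 inv orb_inv by metis
  then show zD: "z \<in> D" using z d0(1) inv by auto
  have "orb al z = {z, al z}" using zD inv orb_inv by metis
  also have "\<dots> = e" using ee z d0(1) inv by auto
  finally show "orb al z = e" .
qed

lemma edge_card2:
  assumes inv: "\<forall>d\<in>D. al d \<in> D \<and> al d \<noteq> d \<and> al (al d) = d"
    and e: "e \<in> edges D al"
  shows "card e = 2"
proof -
  obtain d0 where d0: "d0 \<in> D" "e = orb al d0" using e unfolding edges_def by auto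
  have ee: "e = {d0, al d0}" using d0 inv orb_inv by metis
  then show ?thesis using inv d0(1) by auto
qed

lemma card_Union_edges:
  assumes fin: "finite D" and inv: "\<forall>d\<in>D. al d \<in> D \<and> al d \<noteq> d \<and> al (al d) = d"
    and w: "w \<subseteq> edges D al"
  shows "card (\<Union>w) = 2 * card w"
proof -
  have pw: "pairwise disjnt w"
    unfolding pairwise_def disjnt_def
  proof (intro ballI impI)
    fix e1 e2 assume e: "e1 \<in> w" "e2 \<in> w" "e1 \<noteq> e2"
    show "e1 \<inter> e2 = {}"
    proof (rule ccontr)
      assume "e1 \<inter> e2 \<noteq> {}"
      then obtain z where "z \<in> e1" "z \<in> e2" by auto
      then have "orb al z = e1" "orb al z = e2" using edge_mem(2)[OF inv] e w by blast+
      then show False using e(3) by simp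
    qed
  qed
  have fe: "\<And>A. A \<in> w \<Longrightarrow> finite A" using edge_card2[OF inv] w card_ge_0_finite
    by (metis subsetD zero_less_numeral)
  have "card (\<Union>w) = sum card w" by (rule card_Union_disjoint[OF pw fe])
  also have "\<dots> = sum (\<lambda>_. 2) w" using edge_card2[OF inv] w by (intro sum.cong) auto
  finally show ?thesis by simp
qed

lemma Union_edges: 
  assumes inv: "\<forall>d\<in>D. al d \<in> D \<and> al d \<noteq> d \<and> al (al d) = d"
  shows "\<Union>(edges D al) = D"
proof
  show "\<Union>(edges D al) \<subseteq> D"
  proof
    fix z assume "z \<in> \<Union>(edges D al)"
    then obtain e where "e \<in> edges D al" "z \<in> e" by auto
    then show "z \<in> D" by (rule edge_mem(1)[OF inv])
  qed
  show "D \<subseteq> \<Union>(edges D al)"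
  proof
    fix z assume "z \<in> D"
    then have "orb al z \<in> edges D al" unfolding edges_def by (rule imageI)
    then show "z \<in> \<Union>(edges D al)" using orb_self[of z al] by (rule UnionI)
  qed
qed

lemma Union_compl_edges:
  assumes inv: "\<forall>d\<in>D. al d \<in> D \<and> al d \<noteq> d \<and> al (al d) = d" and w: "w \<subseteq> edges D al"
  shows "\<Union>(edges D al - w) = D - \<Union>w"
proof
  show "\<Union>(edges D al - w) \<subseteq> D - \<Union>w"
  proof
    fix z assume "z \<in> \<Union>(edges D al - w)"
    then obtain e where e: "e \<in> edges D al" "e \<notin> w" "z \<in> e" by auto
    have z: "z \<in> D" "orb al z = e" using edge_mem[OF inv e(1) e(3)] by auto
    have "z \<notin> \<Union>w"
    proof
      assume "z \<in> \<Union>w"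
      then obtain e' where "e' \<in> w" "z \<in> e'" by auto
      then have "orb al z = e'" using edge_mem(2)[OF inv] w by blast
      then show False using z(2) e(2) \<open>e' \<in> w\<close> by simp
    qed
    then show "z \<in> D - \<Union>w" using z by simp
  qed
  show "D - \<Union>w \<subseteq> \<Union>(edges D al - w)"
  proof
    fix z assume z: "z \<in> D - \<Union>w"
    have "orb al z \<in> edges D al" "z \<in> orb al z" using z orb_self unfolding edges_def by auto
    moreover have "orb al z \<notin> w" using z orb_self[of z al] by blast
    ultimately show "z \<in> \<Union>(edges D al - w)" by blast
  qed
qed

lemma aclosed_Union:
  assumes inv: "\<forall>d\<in>D. al d \<in> D \<and> al d \<noteq> d \<and> al (al d) = d" and w: "w \<subseteq> edges D al"
  shows "aclosed al (\<Union>w)"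
  unfolding aclosed_def
proof
  fix z assume "z \<in> \<Union>w"
  then obtain e where e: "e \<in> w" "z \<in> e" by auto
  have "orb al z = e" "z \<in> D" using edge_mem[OF inv _ e(2)] e(1) w by auto
  then have "al z \<in> e" using orb_step[of al z] by simp
  then show "al z \<in> \<Union>w" using e(1) by auto
qed

lemma pm_conn:
  assumes pm: "planar_map D al sg"
  shows "ncls D (gr D sg \<union> gr D al) = 1"
proof -
  have mr: "map_rel D al sg = gr D al \<union> gr D sg" unfolding map_rel_def gr_def by auto
  have "eqc D (gr D sg \<union> gr D al) = D \<times> D"
  proof
    show "eqc D (gr D sg \<union> gr D al) \<subseteq> D \<times> D" unfolding eqc_def by auto
    show "D \<times> D \<subseteq> eqc D (gr D sg \<union> gr D al)"
    proof
      fix q assume q: "q \<in> D \<times> D"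
      then obtain d d' where dd: "q = (d, d')" "d \<in> D" "d' \<in> D" by auto
      have "(d, d') \<in> (map_rel D al sg)\<^sup>*" using pm dd unfolding planar_map_def by blast
      then have "(d, d') \<in> (gr D sg \<union> gr D al)\<^sup>*" unfolding mr by (simp add: Un_commute)
      moreover have "(gr D sg \<union> gr D al)\<^sup>* \<subseteq> sc (gr D sg \<union> gr D al)"
        unfolding sc_def by (rule rtrancl_mono) auto
      ultimately show "q \<in> eqc D (gr D sg \<union> gr D al)" using dd unfolding eqc_def by auto
    qed
  qed
  moreover have "D // (D \<times> D) = {D}" using pm_basic(2)[OF pm] unfolding quotient_def by auto
  ultimately show ?thesis unfolding ncls_def by simp
qed

lemma topo:
  assumes pm: "planar_map D al sg" and w: "w \<subseteq> edges D al"
  shows "int (ncls D (gr D (sg \<circ> al) \<union> gr D (aS al (\<Union>(edges D al - w)))))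
         = int (ncls D (gr D sg \<union> gr D (aS al (\<Union>w)))) - int (card (verts D sg)) + 1 + int (card w)"
proof -
  note b = pm_basic[OF pm]
  have inv: "\<forall>d\<in>D. al d \<in> D \<and> al d \<noteq> d \<and> al (al d) = d" by (rule b(5))
  have bsa: "bij_betw (sg \<circ> al) D D" using b(4) b(3) by (rule bij_betw_trans)
  have V: "card (verts D sg) = cyc D sg" unfolding verts_def by (rule card_orbs[OF b(1) b(3)])
  have F: "card (faces D al sg) = cyc D (sg \<circ> al)" unfolding faces_def by (rule card_orbs[OF b(1) bsa])
  have finE: "finite (edges D al)" unfolding edges_def using b(1) by simp
  have cD: "card D = 2 * card (edges D al)"
    using card_Union_edges[OF b(1) inv subset_refl] Union_edges[OF inv] by simp
  have eul: "int (card (verts D sg)) - int (card (edges D al)) + int (card (faces D al sg)) = 2"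
    using pm unfolding planar_map_def by blast
  have conn: "ncls D (gr D sg \<union> gr D al) = 1" by (rule pm_conn[OF pm])
  have euler1: "2 * int (cyc D sg) + 2 * int (cyc D (sg \<circ> al)) = int (card D) + 4"
    using eul V F cD by simp
  have cyc2: "cyc D (sg \<circ> al \<circ> al) = cyc D sg" by (rule cyc_cong) (use inv in auto)
  have euler2: "2 * int (cyc D (sg \<circ> al)) + 2 * int (cyc D (sg \<circ> al \<circ> al)) = int (card D) + 4"
    using euler1 cyc2 by simp
  have conn2: "ncls D (gr D (sg \<circ> al) \<union> gr D al) = 1"
  proof -
    have "ncls D (gr D (sg \<circ> al) \<union> gr D al) = ncls D (gr D sg \<union> gr D al)"
    proof (rule ncls_cong)
      show "gr D (sg \<circ> al) \<union> gr D al \<subseteq> sc (gr D sg \<union> gr D al)"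
      proof
        fix q assume "q \<in> gr D (sg \<circ> al) \<union> gr D al"
        then consider z where "z \<in> D" "q = (z, sg (al z))" | z where "z \<in> D" "q = (z, al z)"
          unfolding gr_def by auto
        then show "q \<in> sc (gr D sg \<union> gr D al)"
        proof cases
          case (1 z)
          have "(z, al z) \<in> gr D sg \<union> gr D al" unfolding gr_def using 1 by auto
          moreover have "(al z, sg (al z)) \<in> gr D sg \<union> gr D al" unfolding gr_def using 1 inv by auto
          ultimately show ?thesis using 1(2) sc_base sc_trans by metis
        next
          case (2 z)
          then have "q \<in> gr D sg \<union> gr D al" unfolding gr_def by auto
          then show ?thesis using sc_incl by blast
        qed
      qed
      show "gr D sg \<union> gr D al \<subseteq> sc (gr D (sg \<circ> al) \<union> gr D al)"
      proof
        fix q assume "q \<in> gr D sg \<union> gr D al"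
        then consider z where "z \<in> D" "q = (z, sg z)" | z where "z \<in> D" "q = (z, al z)"
          unfolding gr_def by auto
        then show "q \<in> sc (gr D (sg \<circ> al) \<union> gr D al)"
        proof cases
          case (1 z)
          have "(z, al z) \<in> gr D (sg \<circ> al) \<union> gr D al" unfolding gr_def using 1 by auto
          moreover have "(al z, sg z) \<in> gr D (sg \<circ> al) \<union> gr D al" unfolding gr_def using 1 inv
            by (auto intro!: image_eqI[of _ _ "al z"])
          ultimately show ?thesis using 1(2) sc_base sc_trans by metis
        next
          case (2 z)
          then have "q \<in> gr D (sg \<circ> al) \<union> gr D al" unfolding gr_def by auto
          then show ?thesis using sc_incl by blast
        qed
      qed
    qed
    then show ?thesis using conn by simp
  qed
  define S where "S = \<Union>w"
  have SD: "S \<subseteq> D"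
  proof
    fix z assume "z \<in> S"
    then obtain e where "e \<in> w" "z \<in> e" unfolding S_def by auto
    then show "z \<in> D" using edge_mem(1)[OF inv] w by auto
  qed
  have clS: "aclosed al S" unfolding S_def by (rule aclosed_Union[OF inv w])
  have cS: "card S = 2 * card w" unfolding S_def by (rule card_Union_edges[OF b(1) inv w])
  have S2: "\<Union>(edges D al - w) = D - S" unfolding S_def by (rule Union_compl_edges[OF inv w])
  have clS2: "aclosed al (D - S)" unfolding aclosed_def
  proof
    fix z assume z: "z \<in> D - S"
    have "al z \<in> D" using inv z by auto
    moreover have "al z \<notin> S"
    proof
      assume "al z \<in> S" then have "al (al z) \<in> S" using clS unfolding aclosed_def by blast
      then show False using z inv by auto
    qed
    ultimately show "al z \<in> D - S" by auto
  qed
  have cS2: "card (D - S) = card D - card S" using SD b(1) by (simp add: card_Diff_subset finite_subset)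
  have w_le: "card w \<le> card (edges D al)" using w finE by (rule card_mono[rotated])
  note g1 = genus_zero_sub[OF b(1) b(3) inv conn euler1 SD clS]
  note g2 = genus_zero_sub[OF b(1) bsa inv conn2 euler2 _ clS2]
  have cc: "cyc D (sg \<circ> al \<circ> aS al (D - S)) = cyc D (sg \<circ> aS al S)"
    by (rule cyc_cong) (use inv in \<open>auto simp: aS_def\<close>)
  have "(D - S) \<subseteq> D" by auto
  note g2' = g2[OF this]
  show ?thesis unfolding S2 S_def[symmetric]
    using g1 g2' cc cS cS2 cD V F eul w_le by (simp add: of_nat_diff)
qed



lemma prod_ind: "finite X \<Longrightarrow> (\<Prod>e\<in>X. (if P e then 1 else 0 :: real)) = (if \<forall>e\<in>X. P e then 1 else 0)"
  by (induction X rule: finite_induct) auto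

lemma sum_ind: "finite A \<Longrightarrow> (\<Sum>x\<in>A. (if P x then 1 else 0 :: real)) = real (card {x\<in>A. P x})"
  by (simp add: sum.inter_filter[symmetric])

lemma eta_sub: "eta_primal D al p s \<subseteq> edges D al"
  unfolding eta_primal_def edges_def by auto

lemma fin_edges: "finite D \<Longrightarrow> finite (edges D al)"
  unfolding edges_def by simp

lemma numM:
  fixes Q' :: "complex set" and s0 :: "'d set \<Rightarrow> complex"
  assumes pm: "planar_map D al sg" and a: "0 < a" "a < 1" and b: "0 < b" and fQ: "finite Q'"
  defines "A \<equiv> edges D al - eta_primal D al sg s0"
  shows "(\<Sum>s'\<in>(verts D sg \<rightarrow>\<^sub>E Q'). mu_weight D al sg (ln ((1 - a) / b)) (ln (1 + real (card Q') * a / (1 - a))) s0 s')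
    = (1/b) ^ card A * (\<Sum>w\<in>Pow A. (real (card Q') * a) ^ card w * (1 - a) ^ card (A - w)
          * real (card Q') ^ ncls D (gr D sg \<union> gr D (aS al (\<Union>w))))"
proof -
  note bb = pm_basic[OF pm]
  define E where "E = edges D al"
  define q where "q = real (card Q')"
  define dl :: "('d set \<Rightarrow> complex) \<Rightarrow> 'd set \<Rightarrow> real" where "dl = (\<lambda>s' e. if e \<notin> eta_primal D al sg s' then 1 else (0::real))"
  have finE: "finite E" unfolding E_def using bb(1) by (rule fin_edges)
  have AE: "A \<subseteq> E" unfolding A_def E_def by auto
  have finA: "finite A" using finE AE finite_subset by blast
  have AE2: "A \<inter> E = A" "E \<inter> A = A" using AE by auto
  have qpos: "q \<ge> 0" unfolding q_def by simp
  have ea: "exp (ln ((1 - a) / b)) = (1 - a) / b" using a b by simp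
  have eb: "exp (ln (1 + q * a / (1 - a))) = 1 + q * a / (1 - a)"
    using a qpos by (intro exp_ln) (auto intro!: add_pos_nonneg divide_nonneg_pos)
  have trm: "exp ((if e \<notin> eta_primal D al sg s0 then 1 else 0) * (ln ((1 - a) / b) + ln (1 + q * a / (1 - a)) * (if e \<notin> eta_primal D al sg s' then 1 else 0)))
      = (if e \<in> A then (1/b) * (q * a * dl s' e + (1 - a)) else 1)" if e: "e \<in> E" for e s'
  proof (cases "e \<in> A")
    case False then have "e \<in> eta_primal D al sg s0" using e unfolding A_def E_def by auto
    then show ?thesis using False by simp
  next
    case True then have ne: "e \<notin> eta_primal D al sg s0" unfolding A_def by auto
    show ?thesis
    proof (cases "e \<notin> eta_primal D al sg s'")
      case True
      have "exp (ln ((1 - a) / b) + ln (1 + q * a / (1 - a))) = (1 - a) / b * (1 + q * a / (1 - a))"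
        by (simp add: exp_add ea eb)
      also have "\<dots> = ((1 - a) * (1 + q * a / (1 - a))) / b" by simp
      also have "(1 - a) * (1 + q * a / (1 - a)) = (1 - a) + q * a" using a by (simp add: distrib_left)
      also have "((1 - a) + q * a) / b = (1/b) * (q * a + (1 - a))" by simp
      finally show ?thesis using ne True \<open>e \<in> A\<close> unfolding dl_def by simp
    next
      case False
      then show ?thesis using ne \<open>e \<in> A\<close> ea unfolding dl_def by simp
    qed
  qed
  have mw: "mu_weight D al sg (ln ((1 - a) / b)) (ln (1 + q * a / (1 - a))) s0 s'
      = (1/b) ^ card A * (\<Sum>w\<in>Pow A. (q * a) ^ card w * (1 - a) ^ card (A - w) * (\<Prod>e\<in>w. dl s' e))" for s'
  proof -
    have "mu_weight D al sg (ln ((1 - a) / b)) (ln (1 + q * a / (1 - a))) s0 s'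
        = (\<Prod>e\<in>E. (if e \<in> A then (1/b) * (q * a * dl s' e + (1 - a)) else 1))"
      unfolding mu_weight_def E_def[symmetric] exp_sum[OF finE] using trm by (intro prod.cong) auto
    also have "\<dots> = (\<Prod>e\<in>A. (1/b) * (q * a * dl s' e + (1 - a)))"
      using prod.If_cases[OF finE, of "\<lambda>e. e \<in> A" "\<lambda>e. (1/b) * (q * a * dl s' e + (1 - a))" "\<lambda>_. 1"] AE
      by (simp add: AE2)
    also have "\<dots> = (1/b) ^ card A * (\<Prod>e\<in>A. q * a * dl s' e + (1 - a))"
      by (simp only: prod.distrib prod_constant)
    also have "(\<Prod>e\<in>A. q * a * dl s' e + (1 - a)) = (\<Sum>w\<in>Pow A. (\<Prod>e\<in>w. q * a * dl s' e) * (\<Prod>e\<in>A - w. 1 - a))"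
      by (rule prod_add[OF finA])
    also have "\<dots> = (\<Sum>w\<in>Pow A. (q * a) ^ card w * (1 - a) ^ card (A - w) * (\<Prod>e\<in>w. dl s' e))"
      by (intro sum.cong refl) (simp add: prod.distrib)
    finally show ?thesis .
  qed
  have cnt: "(\<Sum>s'\<in>(verts D sg \<rightarrow>\<^sub>E Q'). (\<Prod>e\<in>w. dl s' e)) = q ^ ncls D (gr D sg \<union> gr D (aS al (\<Union>w)))"
    if w: "w \<in> Pow A" for w
  proof -
    have finw: "finite w" using w finA finite_subset by blast
    have wE: "w \<subseteq> orb al ` D" using w AE unfolding E_def edges_def by auto
    have "(\<Sum>s'\<in>(verts D sg \<rightarrow>\<^sub>E Q'). (\<Prod>e\<in>w. dl s' e))
        = (\<Sum>s'\<in>(verts D sg \<rightarrow>\<^sub>E Q'). (if \<forall>e\<in>w. e \<notin> eta_primal D al sg s' then 1 else 0))"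
      unfolding dl_def using prod_ind[OF finw] by simp
    also have "\<dots> = real (card {s' \<in> verts D sg \<rightarrow>\<^sub>E Q'. \<forall>e\<in>w. e \<notin> eta_primal D al sg s'})"
      by (rule sum_ind) (use bb(1) fQ in \<open>auto simp: verts_def intro!: finite_PiE\<close>)
    also have "card {s' \<in> verts D sg \<rightarrow>\<^sub>E Q'. \<forall>e\<in>w. e \<notin> eta_primal D al sg s'}
        = card Q' ^ ncls D (gr D sg \<union> gr D (aS al (\<Union>w)))"
      unfolding verts_def by (rule count_agree[OF bb(1) bb(3) bb(5) wE])
    finally show ?thesis unfolding q_def by simp
  qed
  have "(\<Sum>s'\<in>(verts D sg \<rightarrow>\<^sub>E Q'). mu_weight D al sg (ln ((1 - a) / b)) (ln (1 + q * a / (1 - a))) s0 s')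
     = (1/b) ^ card A * (\<Sum>w\<in>Pow A. (q * a) ^ card w * (1 - a) ^ card (A - w) *
          (\<Sum>s'\<in>(verts D sg \<rightarrow>\<^sub>E Q'). (\<Prod>e\<in>w. dl s' e)))"
  proof -
    have "(\<Sum>s'\<in>(verts D sg \<rightarrow>\<^sub>E Q'). mu_weight D al sg (ln ((1 - a) / b)) (ln (1 + q * a / (1 - a))) s0 s')
      = (\<Sum>s'\<in>(verts D sg \<rightarrow>\<^sub>E Q'). (1/b) ^ card A * (\<Sum>w\<in>Pow A. (q * a) ^ card w * (1 - a) ^ card (A - w) * (\<Prod>e\<in>w. dl s' e)))"
      using mw by (intro sum.cong refl)
    also have "\<dots> = (1/b) ^ card A * (\<Sum>s'\<in>(verts D sg \<rightarrow>\<^sub>E Q'). (\<Sum>w\<in>Pow A. (q * a) ^ card w * (1 - a) ^ card (A - w) * (\<Prod>e\<in>w. dl s' e)))"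
      by (rule sum_distrib_left[symmetric])
    also have "(\<Sum>s'\<in>(verts D sg \<rightarrow>\<^sub>E Q'). (\<Sum>w\<in>Pow A. (q * a) ^ card w * (1 - a) ^ card (A - w) * (\<Prod>e\<in>w. dl s' e)))
        = (\<Sum>w\<in>Pow A. (\<Sum>s'\<in>(verts D sg \<rightarrow>\<^sub>E Q'). (q * a) ^ card w * (1 - a) ^ card (A - w) * (\<Prod>e\<in>w. dl s' e)))"
      by (rule sum.swap)
    also have "\<dots> = (\<Sum>w\<in>Pow A. (q * a) ^ card w * (1 - a) ^ card (A - w) * (\<Sum>s'\<in>(verts D sg \<rightarrow>\<^sub>E Q'). (\<Prod>e\<in>w. dl s' e)))"
      by (intro sum.cong refl) (rule sum_distrib_left[symmetric])
    finally show ?thesis .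
  qed
  also have "\<dots> = (1/b) ^ card A * (\<Sum>w\<in>Pow A. (q * a) ^ card w * (1 - a) ^ card (A - w) *
          q ^ ncls D (gr D sg \<union> gr D (aS al (\<Union>w))))"
    using cnt by (intro arg_cong[where f="\<lambda>x. (1/b) ^ card A * x"] sum.cong refl) simp
  finally show ?thesis unfolding q_def .
qed



lemma numP:
  fixes Q Q' :: "complex set" and s0 :: "'d set \<Rightarrow> complex"
  assumes pm: "planar_map D al sg" and a: "0 < a" "a < 1" and fQ: "finite Q'"
    and s0: "s0 \<in> verts D sg \<rightarrow>\<^sub>E Q"
  defines "A \<equiv> edges D al - eta_primal D al sg s0"
  shows "(\<Sum>p\<in>{p \<in> Sigma_conf D al sg Q Q'. fst p = s0}. P_weight D al sg a b p)
    = b ^ card (eta_primal D al sg s0) * (\<Sum>w\<in>Pow A. a ^ card w * (1 - a) ^ card (A - w)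
          * real (card Q') ^ ncls D (gr D (sg \<circ> al) \<union> gr D (aS al (\<Union>(edges D al - w)))))"
proof -
  note bb = pm_basic[OF pm]
  define E where "E = edges D al"
  define q where "q = real (card Q')"
  define e0 where "e0 = eta_primal D al sg s0"
  define ed where "ed = (\<lambda>s'::'d set \<Rightarrow> complex. eta_dual D al sg s')"
  define dl :: "('d set \<Rightarrow> complex) \<Rightarrow> 'd set \<Rightarrow> real" where "dl = (\<lambda>s' e. if e \<notin> ed s' then 1 else (0::real))"
  define Fs where "Fs = faces D al sg"
  have finE: "finite E" unfolding E_def using bb(1) by (rule fin_edges)
  have AE: "A \<subseteq> E" unfolding A_def E_def by auto
  have finA: "finite A" using finE AE finite_subset by blast
  have AE2: "E \<inter> {e. e \<in> A} = A" "E \<inter> - {e. e \<in> A} = E - A" using AE by auto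
  have edE: "ed s' \<subseteq> E" for s' unfolding ed_def E_def eta_dual_def by (rule eta_sub)
  have e0E: "e0 \<subseteq> E" unfolding e0_def E_def by (rule eta_sub)
  have Aeq: "A = E - e0" unfolding A_def E_def e0_def ..
  have finF: "finite (Fs \<rightarrow>\<^sub>E Q')" unfolding Fs_def faces_def using bb(1) fQ by (auto intro!: finite_PiE)
  have setq: "{p \<in> Sigma_conf D al sg Q Q'. fst p = s0} = Pair s0 ` {s' \<in> Fs \<rightarrow>\<^sub>E Q'. e0 \<inter> ed s' = {}}"
    unfolding Sigma_conf_def Fs_def e0_def ed_def using s0 by auto
  have step1: "(\<Sum>p\<in>{p \<in> Sigma_conf D al sg Q Q'. fst p = s0}. P_weight D al sg a b p)
      = b ^ card e0 * (\<Sum>s'\<in>Fs \<rightarrow>\<^sub>E Q'. (if e0 \<inter> ed s' = {} then a ^ card (ed s') else 0))"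
  proof -
    have "(\<Sum>p\<in>{p \<in> Sigma_conf D al sg Q Q'. fst p = s0}. P_weight D al sg a b p)
        = (\<Sum>s'\<in>{s' \<in> Fs \<rightarrow>\<^sub>E Q'. e0 \<inter> ed s' = {}}. P_weight D al sg a b (s0, s'))"
      unfolding setq by (rule sum.reindex_cong[where l="Pair s0"]) (auto simp: inj_on_def)
    also have "\<dots> = (\<Sum>s'\<in>{s' \<in> Fs \<rightarrow>\<^sub>E Q'. e0 \<inter> ed s' = {}}. b ^ card e0 * a ^ card (ed s'))"
      unfolding P_weight_def e0_def ed_def by (simp add: mult.commute)
    also have "\<dots> = b ^ card e0 * (\<Sum>s'\<in>{s' \<in> Fs \<rightarrow>\<^sub>E Q'. e0 \<inter> ed s' = {}}. a ^ card (ed s'))"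
      by (rule sum_distrib_left[symmetric])
    also have "(\<Sum>s'\<in>{s' \<in> Fs \<rightarrow>\<^sub>E Q'. e0 \<inter> ed s' = {}}. a ^ card (ed s'))
        = (\<Sum>s'\<in>Fs \<rightarrow>\<^sub>E Q'. (if e0 \<inter> ed s' = {} then a ^ card (ed s') else 0))"
      by (rule sum.inter_filter[OF finF])
    finally show ?thesis .
  qed
  have perS: "(if e0 \<inter> ed s' = {} then a ^ card (ed s') else 0)
      = (\<Sum>w\<in>Pow A. a ^ card w * (1 - a) ^ card (A - w) * (\<Prod>e\<in>E - w. dl s' e))" for s'
  proof -
    define wt where "wt = (\<lambda>e. if e \<in> A then a + (1 - a) * dl s' e else dl s' e)"
    have pw: "(if e0 \<inter> ed s' = {} then a ^ card (ed s') else 0) = (\<Prod>e\<in>E. wt e)"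
    proof (cases "e0 \<inter> ed s' = {}")
      case True
      have "(\<Prod>e\<in>E. wt e) = (\<Prod>e\<in>E. (if e \<in> ed s' then a else 1))"
      proof (rule prod.cong[OF refl])
        fix e assume "e \<in> E"
        show "wt e = (if e \<in> ed s' then a else 1)"
        proof (cases "e \<in> ed s'")
          case True
          then have "e \<in> A" using \<open>e0 \<inter> ed s' = {}\<close> \<open>e \<in> E\<close> Aeq by auto
          then show ?thesis using True unfolding wt_def dl_def by simp
        next
          case False then show ?thesis unfolding wt_def dl_def by simp
        qed
      qed
      also have "\<dots> = a ^ card (E \<inter> {e. e \<in> ed s'})"
        using prod.If_cases[OF finE, of "\<lambda>e. e \<in> ed s'" "\<lambda>_. a" "\<lambda>_. 1"] by simp
      also have "E \<inter> {e. e \<in> ed s'} = ed s'" using edE by auto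
      finally show ?thesis using True by simp
    next
      case False
      then obtain e where e: "e \<in> e0" "e \<in> ed s'" by auto
      have "e \<in> E" "e \<notin> A" "wt e = 0" using e e0E Aeq unfolding wt_def dl_def by auto
      then have "(\<Prod>e\<in>E. wt e) = 0" using finE by (intro prod_zero) auto
      then show ?thesis using False by simp
    qed
    also have "(\<Prod>e\<in>E. wt e) = (\<Prod>e\<in>A. a + (1 - a) * dl s' e) * (\<Prod>e\<in>E - A. dl s' e)"
      unfolding wt_def using prod.If_cases[OF finE, of "\<lambda>e. e \<in> A" "\<lambda>e. a + (1 - a) * dl s' e" "dl s'"]
      unfolding AE2 by simp
    also have "(\<Prod>e\<in>A. a + (1 - a) * dl s' e) = (\<Sum>w\<in>Pow A. (\<Prod>e\<in>w. a) * (\<Prod>e\<in>A - w. (1 - a) * dl s' e))"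
      by (rule prod_add[OF finA])
    also have "(\<Sum>w\<in>Pow A. (\<Prod>e\<in>w. a) * (\<Prod>e\<in>A - w. (1 - a) * dl s' e)) * (\<Prod>e\<in>E - A. dl s' e)
        = (\<Sum>w\<in>Pow A. (\<Prod>e\<in>w. a) * (\<Prod>e\<in>A - w. (1 - a) * dl s' e) * (\<Prod>e\<in>E - A. dl s' e))"
      by (rule sum_distrib_right)
    also have "\<dots> = (\<Sum>w\<in>Pow A. a ^ card w * (1 - a) ^ card (A - w) * (\<Prod>e\<in>E - w. dl s' e))"
    proof (rule sum.cong[OF refl])
      fix w assume w: "w \<in> Pow A"
      have un: "(A - w) \<union> (E - A) = E - w" using w AE by auto
      have dj: "(A - w) \<inter> (E - A) = {}" by auto
      have fin2: "finite (A - w)" "finite (E - A)" using finA finE by auto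
      have "(\<Prod>e\<in>E - w. dl s' e) = (\<Prod>e\<in>A - w. dl s' e) * (\<Prod>e\<in>E - A. dl s' e)"
        using prod.union_disjoint[OF fin2 dj, of "dl s'"] un by simp
      moreover have "(\<Prod>e\<in>A - w. (1 - a) * dl s' e) = (1 - a) ^ card (A - w) * (\<Prod>e\<in>A - w. dl s' e)"
        by (simp only: prod.distrib prod_constant)
      moreover have "(\<Prod>e\<in>w. a) = a ^ card w" by simp
      ultimately show "(\<Prod>e\<in>w. a) * (\<Prod>e\<in>A - w. (1 - a) * dl s' e) * (\<Prod>e\<in>E - A. dl s' e)
          = a ^ card w * (1 - a) ^ card (A - w) * (\<Prod>e\<in>E - w. dl s' e)" by (simp add: mult.assoc)
    qed
    finally show ?thesis .
  qed
  have cnt: "(\<Sum>s'\<in>Fs \<rightarrow>\<^sub>E Q'. (\<Prod>e\<in>E - w. dl s' e)) = q ^ ncls D (gr D (sg \<circ> al) \<union> gr D (aS al (\<Union>(E - w))))"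
    for w
  proof -
    have finw: "finite (E - w)" using finE by simp
    have wE: "E - w \<subseteq> orb al ` D" unfolding E_def edges_def by auto
    have bsa: "bij_betw (sg \<circ> al) D D" using bb(4) bb(3) by (rule bij_betw_trans)
    have "(\<Sum>s'\<in>Fs \<rightarrow>\<^sub>E Q'. (\<Prod>e\<in>E - w. dl s' e))
        = (\<Sum>s'\<in>Fs \<rightarrow>\<^sub>E Q'. (if \<forall>e\<in>E - w. e \<notin> ed s' then 1 else 0))"
      unfolding dl_def using prod_ind[OF finw] by simp
    also have "\<dots> = real (card {s' \<in> Fs \<rightarrow>\<^sub>E Q'. \<forall>e\<in>E - w. e \<notin> ed s'})"
      by (rule sum_ind[OF finF])
    also have "card {s' \<in> Fs \<rightarrow>\<^sub>E Q'. \<forall>e\<in>E - w. e \<notin> ed s'}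
        = card Q' ^ ncls D (gr D (sg \<circ> al) \<union> gr D (aS al (\<Union>(E - w))))"
      unfolding Fs_def faces_def ed_def eta_dual_def by (rule count_agree[OF bb(1) bsa bb(5) wE])
    finally show ?thesis unfolding q_def by simp
  qed
  have "(\<Sum>s'\<in>Fs \<rightarrow>\<^sub>E Q'. (if e0 \<inter> ed s' = {} then a ^ card (ed s') else 0))
      = (\<Sum>s'\<in>Fs \<rightarrow>\<^sub>E Q'. (\<Sum>w\<in>Pow A. a ^ card w * (1 - a) ^ card (A - w) * (\<Prod>e\<in>E - w. dl s' e)))"
    using perS by (intro sum.cong refl)
  also have "\<dots> = (\<Sum>w\<in>Pow A. (\<Sum>s'\<in>Fs \<rightarrow>\<^sub>E Q'. a ^ card w * (1 - a) ^ card (A - w) * (\<Prod>e\<in>E - w. dl s' e)))"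
    by (rule sum.swap)
  also have "\<dots> = (\<Sum>w\<in>Pow A. a ^ card w * (1 - a) ^ card (A - w) * (\<Sum>s'\<in>Fs \<rightarrow>\<^sub>E Q'. (\<Prod>e\<in>E - w. dl s' e)))"
    by (intro sum.cong refl) (rule sum_distrib_left[symmetric])
  also have "\<dots> = (\<Sum>w\<in>Pow A. a ^ card w * (1 - a) ^ card (A - w) * q ^ ncls D (gr D (sg \<circ> al) \<union> gr D (aS al (\<Union>(E - w)))))"
    using cnt by simp
  finally show ?thesis using step1 unfolding e0_def E_def q_def by simp
qed



lemma num_rel:
  fixes Q Q' :: "complex set" and s0 :: "'d set \<Rightarrow> complex"
  assumes pm: "planar_map D al sg" and a: "0 < a" "a < 1" and b: "0 < b"
    and fQ: "finite Q'" and neQ: "Q' \<noteq> {}"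
    and s0: "s0 \<in> verts D sg \<rightarrow>\<^sub>E Q"
  shows "(\<Sum>p\<in>{p \<in> Sigma_conf D al sg Q Q'. fst p = s0}. P_weight D al sg a b p) * real (card Q') ^ card (verts D sg)
    = real (card Q') * b ^ card (edges D al) *
      (\<Sum>s'\<in>(verts D sg \<rightarrow>\<^sub>E Q'). mu_weight D al sg (ln ((1 - a) / b)) (ln (1 + real (card Q') * a / (1 - a))) s0 s')"
proof -
  note bb = pm_basic[OF pm]
  define E where "E = edges D al"
  define q where "q = real (card Q')"
  define V where "V = card (verts D sg)"
  define e0 where "e0 = eta_primal D al sg s0"
  define A where "A = E - e0"
  define c where "c = (\<lambda>w. ncls D (gr D sg \<union> gr D (aS al (\<Union>w))))"
  define cs where "cs = (\<lambda>w. ncls D (gr D (sg \<circ> al) \<union> gr D (aS al (\<Union>(E - w)))))"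
  have finE: "finite E" unfolding E_def using bb(1) by (rule fin_edges)
  have e0E: "e0 \<subseteq> E" unfolding e0_def E_def by (rule eta_sub)
  have AE: "A \<subseteq> E" unfolding A_def by auto
  have cardE: "card e0 + card A = card E" unfolding A_def using e0E finE
    by (metis card_Diff_subset card_mono finite_subset le_add_diff_inverse)
  have tp: "cs w + V = c w + 1 + card w" if w: "w \<in> Pow A" for w
  proof -
    have "w \<subseteq> edges D al" using w AE unfolding E_def by auto
    from topo[OF pm this] show ?thesis unfolding cs_def c_def V_def E_def by linarith
  qed
  have P: "(\<Sum>p\<in>{p \<in> Sigma_conf D al sg Q Q'. fst p = s0}. P_weight D al sg a b p)
     = b ^ card e0 * (\<Sum>w\<in>Pow A. a ^ card w * (1 - a) ^ card (A - w) * q ^ cs w)"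
    using numP[OF pm a fQ s0] unfolding A_def e0_def E_def q_def cs_def by simp
  have M: "(\<Sum>s'\<in>(verts D sg \<rightarrow>\<^sub>E Q'). mu_weight D al sg (ln ((1 - a) / b)) (ln (1 + real (card Q') * a / (1 - a))) s0 s')
     = (1/b) ^ card A * (\<Sum>w\<in>Pow A. (q * a) ^ card w * (1 - a) ^ card (A - w) * q ^ c w)"
    using numM[OF pm a b fQ, of s0] unfolding A_def e0_def E_def q_def c_def by simp
  have inner: "(\<Sum>w\<in>Pow A. a ^ card w * (1 - a) ^ card (A - w) * q ^ cs w) * q ^ V
      = q * (\<Sum>w\<in>Pow A. (q * a) ^ card w * (1 - a) ^ card (A - w) * q ^ c w)"
  proof -
    have "(\<Sum>w\<in>Pow A. a ^ card w * (1 - a) ^ card (A - w) * q ^ cs w) * q ^ V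
        = (\<Sum>w\<in>Pow A. a ^ card w * (1 - a) ^ card (A - w) * q ^ cs w * q ^ V)"
      by (rule sum_distrib_right)
    also have "\<dots> = (\<Sum>w\<in>Pow A. q * ((q * a) ^ card w * (1 - a) ^ card (A - w) * q ^ c w))"
    proof (rule sum.cong[OF refl])
      fix w assume w: "w \<in> Pow A"
      have "q ^ cs w * q ^ V = q ^ (cs w + V)" by (simp add: power_add)
      also have "\<dots> = q ^ (Suc (card w + c w))" using tp[OF w] by (simp add: add.commute)
      also have "\<dots> = q * q ^ card w * q ^ c w" by (simp add: power_add)
      finally have "q ^ cs w * q ^ V = q * q ^ card w * q ^ c w" .
      then show "a ^ card w * (1 - a) ^ card (A - w) * q ^ cs w * q ^ V = q * ((q * a) ^ card w * (1 - a) ^ card (A - w) * q ^ c w)"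
        by (simp add: power_mult_distrib mult.commute mult.left_commute)
    qed
    also have "\<dots> = q * (\<Sum>w\<in>Pow A. (q * a) ^ card w * (1 - a) ^ card (A - w) * q ^ c w)"
      by (rule sum_distrib_left[symmetric])
    finally show ?thesis .
  qed
  have bE: "b ^ card e0 = b ^ card E * (1/b) ^ card A"
  proof -
    have "b ^ card E * (1/b) ^ card A = b ^ card e0 * (b ^ card A * (1/b) ^ card A)"
      using cardE by (simp add: power_add[symmetric] mult.assoc)
    also have "b ^ card A * (1/b) ^ card A = 1" using b by (simp add: power_mult_distrib[symmetric])
    finally show ?thesis by simp
  qed
  define Y where "Y = (\<Sum>w\<in>Pow A. (q * a) ^ card w * (1 - a) ^ card (A - w) * q ^ c w)"
  have eqL: "(\<Sum>p\<in>{p \<in> Sigma_conf D al sg Q Q'. fst p = s0}. P_weight D al sg a b p) * real (card Q') ^ card (verts D sg)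
      = b ^ card e0 * (q * Y)"
    apply (subst P)
    unfolding q_def[symmetric] V_def[symmetric] Y_def inner[symmetric] by (simp add: mult.assoc)
  have eqR: "(\<Sum>s'\<in>(verts D sg \<rightarrow>\<^sub>E Q'). mu_weight D al sg (ln ((1 - a) / b)) (ln (1 + real (card Q') * a / (1 - a))) s0 s')
      = (1/b) ^ card A * Y" unfolding Y_def by (rule M)
  show ?thesis
    apply (subst eqL)
    apply (subst eqR)
    unfolding q_def[symmetric] E_def[symmetric] bE by (simp add: mult_ac)
qed

theorem theorem3p2:
  fixes D :: "'d set" and alpha sigma :: "'d \<Rightarrow> 'd"
    and Q Q' :: "complex set" and a b :: real
  assumes "planar_map D alpha sigma"
    and "finite Q" and "Q \<noteq> {}" and "uminus ` Q = Q"
    and "finite Q'" and "Q' \<noteq> {}" and "uminus ` Q' = Q'"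
    and "0 < a" and "a < 1" and "0 < b" and "b \<le> 1"
  shows "\<forall>s0 \<in> (verts D sigma \<rightarrow>\<^sub>E Q).
           law_P D alpha sigma Q Q' a b s0 =
           law_mu D alpha sigma Q Q' (ln ((1 - a) / b))
                  (ln (1 + real (card Q') * a / (1 - a))) s0"
proof
  fix s0 assume s0: "s0 \<in> verts D sigma \<rightarrow>\<^sub>E Q"
  note pm = assms(1)
  note bb = pm_basic[OF pm]
  define al where "al = ln ((1 - a) / b)"
  define be where "be = ln (1 + real (card Q') * a / (1 - a))"
  define VQ where "VQ = verts D sigma \<rightarrow>\<^sub>E Q"
  define Pn where "Pn = (\<lambda>s. \<Sum>p\<in>{p \<in> Sigma_conf D alpha sigma Q Q'. fst p = s}. P_weight D alpha sigma a b p)"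
  define Mn where "Mn = (\<lambda>s. \<Sum>s'\<in>(verts D sigma \<rightarrow>\<^sub>E Q'). mu_weight D alpha sigma al be s s')"
  define K where "K = real (card Q') * b ^ card (edges D alpha) / real (card Q') ^ card (verts D sigma)"
  have qpos: "real (card Q') > 0" using assms(5,6) by (simp add: card_gt_0_iff)
  have Kne: "K \<noteq> 0" unfolding K_def using qpos assms(10) by simp
  have PK: "Pn s = K * Mn s" if s: "s \<in> VQ" for s
  proof -
    have "Pn s * real (card Q') ^ card (verts D sigma) = real (card Q') * b ^ card (edges D alpha) * Mn s"
      unfolding Pn_def Mn_def al_def be_def
      by (rule num_rel[OF pm assms(8,9,10,5,6)]) (use s in \<open>simp add: VQ_def\<close>)
    then show ?thesis unfolding K_def using qpos by (simp add: field_simps)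
  qed
  have finVQ: "finite VQ" unfolding VQ_def verts_def using bb(1) assms(2) by (auto intro!: finite_PiE)
  have finS: "finite (Sigma_conf D alpha sigma Q Q')"
  proof (rule finite_subset)
    show "Sigma_conf D alpha sigma Q Q' \<subseteq> (verts D sigma \<rightarrow>\<^sub>E Q) \<times> (faces D alpha sigma \<rightarrow>\<^sub>E Q')"
      unfolding Sigma_conf_def by auto
    show "finite ((verts D sigma \<rightarrow>\<^sub>E Q) \<times> (faces D alpha sigma \<rightarrow>\<^sub>E Q'))"
      unfolding verts_def faces_def using bb(1) assms(2,5) by (auto intro!: finite_PiE)
  qed
  have tot: "(\<Sum>p\<in>Sigma_conf D alpha sigma Q Q'. P_weight D alpha sigma a b p) = (\<Sum>s\<in>VQ. Pn s)"
  proof -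
    have "fst ` Sigma_conf D alpha sigma Q Q' \<subseteq> VQ" unfolding Sigma_conf_def VQ_def by auto
    from sum.group[OF finS finVQ this, of "P_weight D alpha sigma a b"]
    show ?thesis unfolding Pn_def by simp
  qed
  have "law_P D alpha sigma Q Q' a b s0 = Pn s0 / (\<Sum>s\<in>VQ. Pn s)"
    unfolding law_P_def tot Pn_def ..
  also have "\<dots> = (K * Mn s0) / (\<Sum>s\<in>VQ. K * Mn s)"
    using PK s0 unfolding VQ_def by (simp add: VQ_def)
  also have "\<dots> = (K * Mn s0) / (K * (\<Sum>s\<in>VQ. Mn s))" by (simp add: sum_distrib_left)
  also have "\<dots> = Mn s0 / (\<Sum>s\<in>VQ. Mn s)" using Kne by simp
  also have "\<dots> = law_mu D alpha sigma Q Q' al be s0" unfolding law_mu_def Mn_def VQ_def ..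
  finally show "law_P D alpha sigma Q Q' a b s0 = law_mu D alpha sigma Q Q' (ln ((1 - a) / b))
                  (ln (1 + real (card Q') * a / (1 - a))) s0" unfolding al_def be_def .
qed

end
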